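(* Assume $g$ is of $n^\alpha$ type. Then for any $G\in C(\mathbb T)$, $c\ge0$ and $\delta>0$, $$\lim_{N\to\infty}\mathcal R^N_c\big[|\langle G,\pi^N\rangle-\langle G,\pi\rangle|>\delta\big]=0,\qquad \pi(dx)=c\,dx+\sum_{j\in J_c}(\lambda_j\Phi(c))^{1/\alpha}\delta_{x_j}(dx).$$ Moreover, for all $j\in J_s$, $\lim_{N\to\infty}\mathcal R^N_c\big[|N^{-\beta_j/\alpha}\xi(k_{j,N})-(\lambda_j\Phi(c))^{1/\alpha}|>\delta\big]=0.$
   Context: $\mathbb N_0=\{0,1,\dots\}$, $\mathbb T=[0,1)$ unit torus, $\langle G,\mu\rangle=\int Gd\mu$. $g:\mathbb N_0\to[0,\infty)$ with $g(n)=0$ iff $n=0$, $|g(n+1)-g(n)|\le g^*$, nondecreasing, $g(n)/n^\alpha\to1$ with $\alpha\in(0,1]$ ($n^\alpha$ type). $g(n)!=\prod_{i\le n}g(i)$, $g(0)!=1$, $Z(\phi)=\sum_n\phi^n/g(n)!$, $\mathcal P_\phi(n)=\phi^n/(g(n)!Z(\phi))$ for $\phi\ge0$, $R(\phi)$ the mean of $\mathcal P_\phi$, $\Phi=R^{-1}$. Finite index set $J$; for $j\in J$, pairwise distinct $x_j\in\mathbb T$, $\beta_j\in\mathbb R$, $\lambda_j>0$; $J_s=\{j:\beta_j>\alpha\}$, $J_c=\{j:\beta_j=\alpha\}$. For $N>|J|$: $\mathbb T_N=\mathbb Z/N\mathbb Z$, $k_{j,N}=\lfloor x_jN\rfloor$,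 $\mathfrak D_N=\{k_{j,N}\}$, $\mathfrak D_{s,N}=\{k_{j,N}:j\in J_s\}$. $\mathcal R^N_c$ is the product probability measure on $\mathbb N_0^{\mathbb T_N}$ (configurations $\xi$) with marginal $\mathcal P_{\Phi(c)}$ at $k\notin\mathfrak D_N$ and $\mathcal P_{\lambda_jN^{\beta_j}\Phi(c)}$ at $k_{j,N}$. $\pi^N=N^{-1}\sum_{k\in\mathbb T_N\setminus\mathfrak D_{s,N}}\xi(k)\delta_{k/N}$. *)

theory Defs
  imports "HOL-Analysis.Analysis" "HOL-Probability.Probability"
begin

definition n_alpha_type :: "(nat \<Rightarrow> real) \<Rightarrow> real \<Rightarrow> real \<Rightarrow> bool" where
  "n_alpha_type g gs \<alpha> \<longleftrightarrow>
     (\<forall>n. g n \<ge> 0) \<and> (\<forall>n. g n = 0 \<longleftrightarrow> n = 0) \<and>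
     (\<forall>n. \<bar>g (Suc n) - g n\<bar> \<le> gs) \<and> mono g \<and>
     0 < \<alpha> \<and> \<alpha> \<le> 1 \<and>
     ((\<lambda>n. g n / real n powr \<alpha>) \<longlongrightarrow> 1) sequentially"

definition gfact :: "(nat \<Rightarrow> real) \<Rightarrow> nat \<Rightarrow> real" where
  "gfact g n = (\<Prod>i\<in>{1..n}. g i)"

definition Zpart :: "(nat \<Rightarrow> real) \<Rightarrow> real \<Rightarrow> real" where
  "Zpart g \<phi> = (\<Sum>n. \<phi> ^ n / gfact g n)"

definition Pgc :: "(nat \<Rightarrow> real) \<Rightarrow> real \<Rightarrow> nat \<Rightarrow> real" where
  "Pgc g \<phi> n = \<phi> ^ n / (gfact g n * Zpart g \<phi>)"

definition Rmean :: "(nat \<Rightarrow> real) \<Rightarrow> real \<Rightarrow> real" where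
  "Rmean g \<phi> = (\<Sum>n. real n * Pgc g \<phi> n)"

definition Phi :: "(nat \<Rightarrow> real) \<Rightarrow> real \<Rightarrow> real" where
  "Phi g c = (THE \<phi>. \<phi> \<ge> 0 \<and> Rmean g \<phi> = c)"

definition Ppmf :: "(nat \<Rightarrow> real) \<Rightarrow> real \<Rightarrow> nat pmf" where
  "Ppmf g \<phi> = embed_pmf (Pgc g \<phi>)"

definition kjN :: "real \<Rightarrow> nat \<Rightarrow> nat" where
  "kjN xj N = nat \<lfloor>xj * real N\<rfloor>"

text \<open>The product measure R^N_c on configurations xi : T_N \<rightarrow> N_0
  (T_N = {0..<N}; values outside T_N are fixed to 0).\<close>
definition RN :: "(nat \<Rightarrow> real) \<Rightarrow> 'j set \<Rightarrow> ('j \<Rightarrow> real) \<Rightarrow> ('j \<Rightarrow> real) \<Rightarrow> ('j \<Rightarrow> real)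
                  \<Rightarrow> real \<Rightarrow> nat \<Rightarrow> (nat \<Rightarrow> nat) pmf" where
  "RN g J x \<beta> lam c N =
     Pi_pmf {..<N} 0 (\<lambda>k. if \<exists>j\<in>J. kjN (x j) N = k
        then (let j = (SOME j. j \<in> J \<and> kjN (x j) N = k)
              in Ppmf g (lam j * real N powr \<beta> j * Phi g c))
        else Ppmf g (Phi g c))"

definition pairN :: "(real \<Rightarrow> real) \<Rightarrow> 'j set \<Rightarrow> ('j \<Rightarrow> real) \<Rightarrow> ('j \<Rightarrow> real) \<Rightarrow> real
                     \<Rightarrow> nat \<Rightarrow> (nat \<Rightarrow> nat) \<Rightarrow> real" where
  "pairN G J x \<beta> \<alpha> N \<xi> =
     (\<Sum>k\<in>{..<N} - {kjN (x j) N | j. j \<in> J \<and> \<beta> j > \<alpha>}. real (\<xi> k) * G (real k / real N)) / real N"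

definition pairLim :: "(nat \<Rightarrow> real) \<Rightarrow> (real \<Rightarrow> real) \<Rightarrow> 'j set \<Rightarrow> ('j \<Rightarrow> real) \<Rightarrow> ('j \<Rightarrow> real)
                       \<Rightarrow> ('j \<Rightarrow> real) \<Rightarrow> real \<Rightarrow> real \<Rightarrow> real" where
  "pairLim g G J x \<beta> lam \<alpha> c =
     c * integral {0..1} G +
     (\<Sum>j\<in>{j\<in>J. \<beta> j = \<alpha>}. (lam j * Phi g c) powr (1 / \<alpha>) * G (x j))"

end

theory Submission
  imports Defs "HOL-Real_Asymp.Real_Asymp"
begin

locale galpha =
  fixes g :: "nat \<Rightarrow> real" and gs \<alpha> :: real
  assumes gtype: "n_alpha_type g gs \<alpha>"
begin

lemma g_nonneg: "g n \<ge> 0" using gtype by (simp add: n_alpha_type_def)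
lemma g_pos: "n > 0 \<Longrightarrow> g n > 0"
  using gtype unfolding n_alpha_type_def by (metis less_eq_real_def not_less0)
lemma g_mono: "m \<le> n \<Longrightarrow> g m \<le> g n"
  using gtype unfolding n_alpha_type_def mono_def by blast
lemma alpha_pos: "\<alpha> > 0" using gtype by (simp add: n_alpha_type_def)
lemma alpha_le1: "\<alpha> \<le> 1" using gtype by (simp add: n_alpha_type_def)
lemma g_lim: "((\<lambda>n. g n / real n powr \<alpha>) \<longlongrightarrow> 1) sequentially"
  using gtype by (simp add: n_alpha_type_def)

lemma g_at_top: "filterlim g at_top sequentially"
proof -
  have pw: "filterlim (\<lambda>n. real n powr \<alpha>) at_top sequentially"
    using alpha_pos by (intro filterlim_compose[OF real_powr_at_top filterlim_real_sequentially]) auto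
  have 1: "filterlim (\<lambda>n. (g n / real n powr \<alpha>) * real n powr \<alpha>) at_top sequentially"
    by (rule filterlim_tendsto_pos_mult_at_top[OF g_lim _ pw]) simp
  have 2: "eventually (\<lambda>n. (g n / real n powr \<alpha>) * real n powr \<alpha> = g n) sequentially"
    using eventually_gt_at_top[of 0] by eventually_elim simp
  show ?thesis using filterlim_cong[OF refl refl 2] 1 by simp
qed

lemma gfact_pos: "gfact g n > 0"
  unfolding gfact_def by (intro prod_pos) (auto intro: g_pos)

lemma gfact_0 [simp]: "gfact g 0 = 1" by (simp add: gfact_def)

lemma gfact_Suc: "gfact g (Suc n) = gfact g n * g (Suc n)"
  unfolding gfact_def by (simp add: prod.nat_ivl_Suc' mult.commute)

definition w :: "real \<Rightarrow> nat \<Rightarrow> real" where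
  "w \<phi> n = \<phi> ^ n / gfact g n"

lemma w_Suc: "w \<phi> (Suc n) = w \<phi> n * (\<phi> / g (Suc n))"
  unfolding w_def gfact_Suc by simp

lemma w_nonneg: "\<phi> \<ge> 0 \<Longrightarrow> w \<phi> n \<ge> 0"
  unfolding w_def using gfact_pos[of n] by simp

lemma w_0 [simp]: "w \<phi> 0 = 1" by (simp add: w_def)

lemma summable_w: "summable (w \<phi>)"
proof -
  have "eventually (\<lambda>n. g n \<ge> 2 * \<bar>\<phi>\<bar> + 1) sequentially"
    using g_at_top by (simp add: filterlim_at_top)
  then have "eventually (\<lambda>n. g (Suc n) \<ge> 2 * \<bar>\<phi>\<bar> + 1) sequentially"
    by (rule eventually_sequentially_Suc[THEN iffD2])
  then obtain N where N: "\<And>n. n \<ge> N \<Longrightarrow> g (Suc n) \<ge> 2 * \<bar>\<phi>\<bar> + 1"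
    by (auto simp: eventually_sequentially)
  have "\<forall>n\<ge>N. norm (w \<phi> (Suc n)) \<le> 1/2 * norm (w \<phi> n)"
  proof safe
    fix n assume "n \<ge> N"
    hence gn: "g (Suc n) \<ge> 2 * \<bar>\<phi>\<bar> + 1" by (rule N)
    have "norm (w \<phi> (Suc n)) = norm (w \<phi> n) * (\<bar>\<phi>\<bar> / g (Suc n))"
      using g_pos[of "Suc n"] by (simp add: w_Suc abs_mult)
    also have "\<bar>\<phi>\<bar> / g (Suc n) \<le> 1/2" using gn by (simp add: field_simps)
    finally show "norm (w \<phi> (Suc n)) \<le> 1/2 * norm (w \<phi> n)"
      by (metis abs_ge_zero mult.commute mult_left_mono real_norm_def)
  qed
  thus ?thesis by (intro summable_ratio_test[where c = "1/2" and N = N]) auto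
qed

lemma pow2_ge: "real n \<le> 2 ^ n"
proof -
  have "n < 2 ^ n" by (rule less_exp)
  hence "real n < real (2 ^ n)" by linarith
  thus ?thesis by simp
qed

lemma summable_nsq_w:
  assumes "\<phi> \<ge> 0"
  shows "summable (\<lambda>n. real n ^ 2 * w \<phi> n)"
proof (rule summable_comparison_test'[OF summable_w[of "4 * \<phi>"]])
  fix n :: nat
  have "real n ^ 2 \<le> (2 ^ n) ^ 2" by (intro power_mono pow2_ge) auto
  also have "((2::real) ^ n) ^ 2 = 4 ^ n" 
  proof -
    have "((2::real) ^ n) ^ 2 = (2 ^ 2) ^ n" by (simp only: power_mult[symmetric] mult.commute)
    thus ?thesis by simp
  qed
  finally have "real n ^ 2 * w \<phi> n \<le> 4 ^ n * w \<phi> n"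
    by (intro mult_right_mono w_nonneg assms)
  also have "4 ^ n * w \<phi> n = w (4 * \<phi>) n" by (simp add: w_def power_mult_distrib)
  finally show "norm (real n ^ 2 * w \<phi> n) \<le> w (4 * \<phi>) n"
    using w_nonneg[OF assms, of n] by simp
qed

lemma summable_n_w:
  assumes "\<phi> \<ge> 0"
  shows "summable (\<lambda>n. real n * w \<phi> n)"
proof (rule summable_comparison_test'[OF summable_nsq_w[OF assms]])
  fix n :: nat
  have "real n \<le> real n ^ 2" by (cases n) (auto simp: power2_eq_square)
  thus "norm (real n * w \<phi> n) \<le> real n ^ 2 * w \<phi> n"
    using w_nonneg[OF assms, of n] by (simp add: mult_right_mono)
qed

end

lemma pmf_nat_sums:
  fixes p :: "nat pmf" and h :: "nat \<Rightarrow> real"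
  assumes "summable (\<lambda>n. pmf p n * \<bar>h n\<bar>)"
  shows "integrable (measure_pmf p) h" "(\<lambda>n. pmf p n * h n) sums measure_pmf.expectation p h"
proof -
  have int: "integrable (count_space UNIV) (\<lambda>n. pmf p n *\<^sub>R h n)"
    using assms by (simp add: integrable_count_space_nat_iff abs_mult)
  show "integrable (measure_pmf p) h"
    unfolding measure_pmf_eq_density
    by (subst integrable_density) (use int in auto)
  have "measure_pmf.expectation p h = integral\<^sup>L (count_space UNIV) (\<lambda>n. pmf p n *\<^sub>R h n)"
    unfolding measure_pmf_eq_density by (subst integral_density) auto
  thus "(\<lambda>n. pmf p n * h n) sums measure_pmf.expectation p h"
    using sums_integral_count_space_nat[OF int] by simp
qed

lemma pmf_nat_prob_sums:
  fixes p :: "nat pmf"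
  shows "(\<lambda>n. pmf p n * indicator A n) sums measure_pmf.prob p A"
proof -
  have "summable (\<lambda>n. pmf p n * \<bar>indicator A n :: real\<bar>)"
  proof (rule summable_comparison_test'[where g = "pmf p"])
    have "integrable (measure_pmf p) (\<lambda>_. 1::real)" by simp
    hence "integrable (count_space UNIV) (\<lambda>n. pmf p n *\<^sub>R (1::real))"
      unfolding measure_pmf_eq_density by (subst (asm) integrable_density) auto
    thus "summable (pmf p)" by (simp add: integrable_count_space_nat_iff)
  qed (auto simp: indicator_def)
  from pmf_nat_sums(2)[OF this] show ?thesis by simp
qed

context galpha
begin

lemma Zpart_eq: "Zpart g \<phi> = suminf (w \<phi>)"
  unfolding Zpart_def w_def ..

lemma w_sums: "w \<phi> sums Zpart g \<phi>"
  unfolding Zpart_eq using summable_w by (rule summable_sums)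

lemma w_le_Z: "\<phi> \<ge> 0 \<Longrightarrow> w \<phi> n \<le> Zpart g \<phi>"
  unfolding Zpart_eq using sum_le_suminf[OF summable_w, of "{n}" \<phi>] w_nonneg by auto

lemma Z_ge1: "\<phi> \<ge> 0 \<Longrightarrow> Zpart g \<phi> \<ge> 1"
  using w_le_Z[of \<phi> 0] by simp

lemma Z_pos: "\<phi> \<ge> 0 \<Longrightarrow> Zpart g \<phi> > 0"
  using Z_ge1[of \<phi>] by simp

lemma Pgc_eq: "Pgc g \<phi> n = w \<phi> n / Zpart g \<phi>"
  unfolding Pgc_def w_def by simp

lemma Pgc_nonneg: "\<phi> \<ge> 0 \<Longrightarrow> Pgc g \<phi> n \<ge> 0"
  unfolding Pgc_eq using w_nonneg[of \<phi> n] Z_pos[of \<phi>] by simp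

lemma Pgc_sums: "\<phi> \<ge> 0 \<Longrightarrow> Pgc g \<phi> sums 1"
  unfolding Pgc_eq using sums_divide[OF w_sums[of \<phi>], of "Zpart g \<phi>"] Z_pos[of \<phi>] by simp

lemma pmf_Ppmf:
  assumes "\<phi> \<ge> 0"
  shows "pmf (Ppmf g \<phi>) n = Pgc g \<phi> n"
proof -
  have "(\<integral>\<^sup>+x. ennreal (Pgc g \<phi> x) \<partial>count_space UNIV) = 1"
    using Pgc_sums[OF assms] Pgc_nonneg[OF assms]
    by (simp add: nn_integral_count_space_nat suminf_ennreal_eq sums_unique[symmetric])
  thus ?thesis unfolding Ppmf_def
    by (subst pmf_embed_pmf) (use Pgc_nonneg[OF assms] in auto)
qed

lemma Pgc_le1: "\<phi> \<ge> 0 \<Longrightarrow> Pgc g \<phi> n \<le> 1"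
  unfolding Pgc_eq using w_le_Z[of \<phi> n] Z_pos[of \<phi>] by simp

lemma Pgc_0: "Pgc g 0 n = (if n = 0 then 1 else 0)"
proof -
  have "w 0 sums 1"
  proof -
    have "w 0 = (\<lambda>n. if n = 0 then 1 else 0)" by (auto simp: w_def fun_eq_iff)
    thus ?thesis by (simp add: sums_single[where i=0 and f="\<lambda>_. 1::real", simplified])
  qed
  hence "Zpart g 0 = 1" using w_sums[of 0] sums_unique2 by blast
  thus ?thesis by (simp add: Pgc_eq w_def)
qed

lemma summable_n_Pgc: "\<phi> \<ge> 0 \<Longrightarrow> summable (\<lambda>n. real n * Pgc g \<phi> n)"
  unfolding Pgc_eq using summable_divide[OF summable_n_w, of \<phi> "Zpart g \<phi>"] by simp

lemma summable_nsq_Pgc: "\<phi> \<ge> 0 \<Longrightarrow> summable (\<lambda>n. real n ^ 2 * Pgc g \<phi> n)"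
  unfolding Pgc_eq using summable_divide[OF summable_nsq_w, of \<phi> "Zpart g \<phi>"] by simp

lemma Rmean_eq: "\<phi> \<ge> 0 \<Longrightarrow> Rmean g \<phi> = suminf (\<lambda>n. real n * w \<phi> n) / Zpart g \<phi>"
  unfolding Rmean_def Pgc_eq
  using suminf_divide[OF summable_n_w, of \<phi> "Zpart g \<phi>"] by simp

lemma Ppmf_expect_sums:
  assumes "\<phi> \<ge> 0" "summable (\<lambda>n. Pgc g \<phi> n * \<bar>h n\<bar>)"
  shows "integrable (measure_pmf (Ppmf g \<phi>)) h"
    "(\<lambda>n. Pgc g \<phi> n * h n) sums measure_pmf.expectation (Ppmf g \<phi>) h"
  using pmf_nat_sums[of "Ppmf g \<phi>" h] assms by (simp_all add: pmf_Ppmf)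

lemma Ppmf_mean:
  assumes "\<phi> \<ge> 0"
  shows "integrable (measure_pmf (Ppmf g \<phi>)) real"
    "measure_pmf.expectation (Ppmf g \<phi>) real = Rmean g \<phi>"
proof -
  have s: "summable (\<lambda>n. Pgc g \<phi> n * \<bar>real n\<bar>)"
    using summable_n_Pgc[OF assms] by (simp add: mult.commute)
  show "integrable (measure_pmf (Ppmf g \<phi>)) real" by (rule Ppmf_expect_sums(1)[OF assms s])
  show "measure_pmf.expectation (Ppmf g \<phi>) real = Rmean g \<phi>"
    using Ppmf_expect_sums(2)[OF assms s] unfolding Rmean_def
    by (simp add: sums_iff mult.commute)
qed

lemma Ppmf_sq:
  assumes "\<phi> \<ge> 0"
  shows "integrable (measure_pmf (Ppmf g \<phi>)) (\<lambda>n. real n ^ 2)"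
proof -
  have s: "summable (\<lambda>n. Pgc g \<phi> n * \<bar>real n ^ 2\<bar>)"
    using summable_nsq_Pgc[OF assms] by (simp add: mult.commute)
  show ?thesis by (rule Ppmf_expect_sums(1)[OF assms s])
qed

lemma Ppmf_prob_sums:
  assumes "\<phi> \<ge> 0"
  shows "(\<lambda>n. Pgc g \<phi> n * indicator A n) sums measure_pmf.prob (Ppmf g \<phi>) A"
  using pmf_nat_prob_sums[of "Ppmf g \<phi>" A] assms by (simp add: pmf_Ppmf)

end


lemma pow_cross_le:
  fixes a b :: real
  assumes "0 \<le> a" "a \<le> b" "m \<le> n"
  shows "a ^ n * b ^ m \<le> b ^ n * a ^ m"
proof -
  have "a ^ n * b ^ m = a ^ m * (a ^ (n - m) * b ^ m)"
    using assms(3) by (simp add: power_add[symmetric] mult.assoc)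
  also have "\<dots> \<le> a ^ m * (b ^ (n - m) * b ^ m)"
    using assms by (intro mult_left_mono mult_right_mono power_mono) auto
  also have "\<dots> = b ^ n * a ^ m"
    using assms(3) by (simp add: power_add[symmetric] mult.commute)
  finally show ?thesis .
qed

context galpha
begin

definition Aw :: "real \<Rightarrow> real" where "Aw \<phi> = suminf (\<lambda>n. real n * w \<phi> n)"

lemma trunc_ineq:
  assumes "0 \<le> a" "a \<le> b" "M \<ge> 2"
  shows "(\<Sum>n<M. real n * w b n) * (\<Sum>m<M. w a m) - (\<Sum>n<M. real n * w a n) * (\<Sum>m<M. w b m)
         \<ge> (b - a) / g 1"
proof -
  define F where "F n m = w b n * w a m - w a n * w b m" for n m
  define D where "D = (\<Sum>n<M. real n * w b n) * (\<Sum>m<M. w a m) - (\<Sum>n<M. real n * w a n) * (\<Sum>m<M. w b m)"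
  have D1: "D = (\<Sum>n<M. \<Sum>m<M. real n * F n m)"
    unfolding D_def F_def sum_product
    by (simp add: sum_subtractf[symmetric] algebra_simps)
  have D2: "D = (\<Sum>n<M. \<Sum>m<M. - (real m * F n m))"
  proof -
    have "D = (\<Sum>m<M. \<Sum>n<M. real m * F m n)" unfolding D1 by simp
    also have "\<dots> = (\<Sum>n<M. \<Sum>m<M. real m * F m n)" by (rule sum.swap)
    also have "\<dots> = (\<Sum>n<M. \<Sum>m<M. - (real m * F n m))"
      by (simp add: F_def algebra_simps)
    finally show ?thesis .
  qed
  define T where "T n m = (real n - real m) * F n m" for n m
  have T_nonneg: "T n m \<ge> 0" for n m
  proof (cases "m \<le> n")
    case True
    have "a ^ n * b ^ m \<le> b ^ n * a ^ m" by (rule pow_cross_le) (use assms True in auto)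
    hence "F n m \<ge> 0"
      unfolding F_def w_def using gfact_pos[of n] gfact_pos[of m]
      by (simp add: field_simps)
    thus ?thesis unfolding T_def using True by simp
  next
    case False
    have "a ^ m * b ^ n \<le> b ^ m * a ^ n" by (rule pow_cross_le) (use assms False in auto)
    hence "F n m \<le> 0"
      unfolding F_def w_def using gfact_pos[of n] gfact_pos[of m]
      by (simp add: field_simps)
    thus ?thesis unfolding T_def using False by (simp add: mult_nonpos_nonpos)
  qed
  have "2 * D = (\<Sum>n<M. \<Sum>m<M. T n m)"
    unfolding T_def mult_2 
    apply (subst (1) D1) apply (subst D2)
    by (simp add: sum.distrib[symmetric] algebra_simps)
  moreover have "(\<Sum>n<M. \<Sum>m<M. T n m) \<ge> (\<Sum>n\<in>{0,1}. \<Sum>m<M. T n m)"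
    using assms by (intro sum_mono2) (auto intro: sum_nonneg T_nonneg)
  moreover have "(\<Sum>n\<in>{0,1}. \<Sum>m<M. T n m) = (\<Sum>m<M. T 0 m) + (\<Sum>m<M. T 1 m)" by simp
  moreover have "(\<Sum>m<M. T 0 m) \<ge> T 0 1"
    using assms by (intro member_le_sum T_nonneg) auto
  moreover have "(\<Sum>m<M. T 1 m) \<ge> T 1 0"
    using assms by (intro member_le_sum T_nonneg) auto
  moreover have "T 0 1 + T 1 0 = 2 * ((b - a) / g 1)"
    unfolding T_def F_def w_def using gfact_Suc[of 0] g_pos[of 1] by (simp add: diff_divide_distrib)
  ultimately have "D \<ge> (b - a) / g 1" by linarith
  thus ?thesis unfolding D_def by simp
qed

lemma cross_ineq:
  assumes "0 \<le> a" "a < b"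
  shows "Aw b * Zpart g a - Aw a * Zpart g b \<ge> (b - a) / g 1"
proof (rule tendsto_lowerbound)
  let ?D = "\<lambda>M. (\<Sum>n<M. real n * w b n) * (\<Sum>m<M. w a m) - (\<Sum>n<M. real n * w a n) * (\<Sum>m<M. w b m)"
  have s1: "(\<lambda>M. \<Sum>n<M. real n * w b n) \<longlonglongrightarrow> Aw b"
    unfolding Aw_def using summable_n_w[of b] assms by (intro summable_LIMSEQ) auto
  have s2: "(\<lambda>M. \<Sum>n<M. real n * w a n) \<longlonglongrightarrow> Aw a"
    unfolding Aw_def using summable_n_w[of a] assms by (intro summable_LIMSEQ) auto
  have s3: "(\<lambda>M. \<Sum>n<M. w a n) \<longlonglongrightarrow> Zpart g a"
    unfolding Zpart_eq by (intro summable_LIMSEQ summable_w)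
  have s4: "(\<lambda>M. \<Sum>n<M. w b n) \<longlonglongrightarrow> Zpart g b"
    unfolding Zpart_eq by (intro summable_LIMSEQ summable_w)
  show "?D \<longlonglongrightarrow> Aw b * Zpart g a - Aw a * Zpart g b"
    by (intro tendsto_intros s1 s2 s3 s4)
  show "\<forall>\<^sub>F M in sequentially. (b - a) / g 1 \<le> ?D M"
    using eventually_ge_at_top[of 2]
    by eventually_elim (rule trunc_ineq, use assms in auto)
qed simp

lemma Rmean_eq': "\<phi> \<ge> 0 \<Longrightarrow> Rmean g \<phi> = Aw \<phi> / Zpart g \<phi>"
  unfolding Aw_def by (rule Rmean_eq)

lemma Rmean_strict_mono:
  assumes "0 \<le> a" "a < b"
  shows "Rmean g a < Rmean g b"
proof -
  have "(b - a) / g 1 > 0" using assms g_pos[of 1] by simp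
  hence "Aw a * Zpart g b < Aw b * Zpart g a" using cross_ineq[OF assms] by simp
  thus ?thesis using Z_pos[of a] Z_pos[of b] assms
    by (simp add: Rmean_eq' divide_simps mult.commute)
qed

lemma Rmean_0: "Rmean g 0 = 0"
proof -
  have "(\<lambda>n. real n * Pgc g 0 n) = (\<lambda>_. 0)" by (auto simp: Pgc_0 fun_eq_iff)
  thus ?thesis unfolding Rmean_def by simp
qed

lemma isCont_Z: "\<phi> \<ge> 0 \<Longrightarrow> isCont (Zpart g) \<phi>"
proof -
  assume h: "\<phi> \<ge> 0"
  have eq: "Zpart g = (\<lambda>x. \<Sum>n. inverse (gfact g n) * x ^ n)"
    by (auto simp: fun_eq_iff Zpart_def field_simps)
  have "summable (\<lambda>n. inverse (gfact g n) * (\<phi> + 1) ^ n)"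
  proof -
    have "w (\<phi> + 1) = (\<lambda>n. inverse (gfact g n) * (\<phi> + 1) ^ n)"
      by (auto simp: w_def fun_eq_iff divide_inverse)
    thus ?thesis using summable_w[of "\<phi> + 1"] by simp
  qed
  thus ?thesis unfolding eq by (rule isCont_powser) (use h in auto)
qed

lemma isCont_Aw: "\<phi> \<ge> 0 \<Longrightarrow> isCont Aw \<phi>"
proof -
  assume h: "\<phi> \<ge> 0"
  have eq: "Aw = (\<lambda>x. \<Sum>n. (real n / gfact g n) * x ^ n)"
    by (auto simp: fun_eq_iff Aw_def w_def field_simps)
  have "summable (\<lambda>n. (real n / gfact g n) * (\<phi> + 1) ^ n)"
    using summable_n_w[of "\<phi> + 1"] h by (simp add: w_def field_simps)
  thus ?thesis unfolding eq by (rule isCont_powser) (use h in auto)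
qed

lemma Rmean_unbounded:
  assumes "c \<ge> 0"
  shows "\<exists>\<phi>\<ge>0. Rmean g \<phi> \<ge> c"
proof -
  define K where "K = nat \<lceil>c\<rceil> + 1"
  have Kc: "real K \<ge> c + 1" unfolding K_def by linarith
  define S where "S = (\<Sum>n<K. 1 / gfact g n)"
  define \<phi> where "\<phi> = max 1 (c * S * gfact g K)"
  have \<phi>1: "\<phi> \<ge> 1" unfolding \<phi>_def by simp
  have \<phi>2: "\<phi> \<ge> c * S * gfact g K" unfolding \<phi>_def by simp
  define h where "h n = (real n - c) * w \<phi> n" for n
  have hs: "summable h"
    unfolding h_def left_diff_distrib
    by (intro summable_diff summable_n_w summable_mult summable_w) (use \<phi>1 in auto)
  have hsum: "suminf h = Aw \<phi> - c * Zpart g \<phi>"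
    unfolding h_def left_diff_distrib Aw_def Zpart_eq
  proof -
    have "(\<Sum>n. real n * w \<phi> n - c * w \<phi> n) = (\<Sum>n. real n * w \<phi> n) - (\<Sum>n. c * w \<phi> n)"
      by (rule suminf_diff[symmetric]) (use summable_n_w[of \<phi>] \<phi>1 summable_w[of \<phi>] in \<open>auto intro: summable_mult\<close>)
    also have "(\<Sum>n. c * w \<phi> n) = c * suminf (w \<phi>)" by (rule suminf_mult[OF summable_w])
    finally show "(\<Sum>n. real n * w \<phi> n - c * w \<phi> n) = (\<Sum>n. real n * w \<phi> n) - c * suminf (w \<phi>)" .
  qed
  have "sum h {..<Suc K} \<le> suminf h"
    using hs
  proof (rule sum_le_suminf)
    fix n assume "n \<in> - {..<Suc K}"
    hence "real n \<ge> c" using Kc by auto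
    thus "0 \<le> h n" unfolding h_def using w_nonneg[of \<phi> n] \<phi>1 by simp
  qed simp
  moreover have "sum h {..<Suc K} \<ge> 0"
  proof -
    have "sum h {..<Suc K} = sum h {..<K} + h K" by simp
    moreover have "sum h {..<K} \<ge> (\<Sum>n<K. - c * (\<phi> ^ (K - 1) / gfact g n))"
    proof (intro sum_mono)
      fix n assume n: "n \<in> {..<K}"
      have "\<phi> ^ n \<le> \<phi> ^ (K - 1)" using n \<phi>1 by (intro power_increasing) auto
      hence "w \<phi> n \<le> \<phi> ^ (K - 1) / gfact g n"
        unfolding w_def using gfact_pos[of n] by (simp add: divide_right_mono)
      hence "c * w \<phi> n \<le> c * (\<phi> ^ (K - 1) / gfact g n)" by (rule mult_left_mono[OF _ assms])
      moreover have "h n \<ge> - c * w \<phi> n"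
      proof -
        have "(- c) * w \<phi> n \<le> (real n - c) * w \<phi> n"
          using w_nonneg[of \<phi> n] \<phi>1 by (intro mult_right_mono) auto
        thus ?thesis unfolding h_def by simp
      qed
      ultimately show "- c * (\<phi> ^ (K - 1) / gfact g n) \<le> h n" by simp
    qed
    moreover have "(\<Sum>n<K. - c * (\<phi> ^ (K - 1) / gfact g n)) = - c * \<phi> ^ (K - 1) * S"
      unfolding S_def by (simp add: sum_distrib_left)
    moreover have "h K \<ge> w \<phi> K"
    proof -
      have "h K \<ge> 1 * w \<phi> K" unfolding h_def using w_nonneg[of \<phi> K] \<phi>1 Kc
        by (intro mult_right_mono) auto
      thus ?thesis by simp
    qed
    moreover have "w \<phi> K \<ge> c * \<phi> ^ (K - 1) * S"
    proof -
      have "K = Suc (K - 1)" unfolding K_def by simp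
      hence "\<phi> ^ K = \<phi> * \<phi> ^ (K - 1)" by (metis power_Suc)
      hence "w \<phi> K = \<phi> * \<phi> ^ (K - 1) / gfact g K" unfolding w_def by simp
      moreover have "\<phi> * \<phi> ^ (K - 1) \<ge> c * S * gfact g K * \<phi> ^ (K - 1)"
        using \<phi>2 \<phi>1 by (intro mult_right_mono) auto
      ultimately have "gfact g K * (c * \<phi> ^ (K - 1) * S) \<le> gfact g K * w \<phi> K"
        using gfact_pos[of K] by (simp add: field_simps)
      thus ?thesis using gfact_pos[of K] by (simp add: mult_le_cancel_left_pos)
    qed
    ultimately show ?thesis by linarith
  qed
  ultimately have "Aw \<phi> - c * Zpart g \<phi> \<ge> 0" using hsum by simp
  hence "Rmean g \<phi> \<ge> c" using Rmean_eq'[of \<phi>] Z_pos[of \<phi>] \<phi>1 by (simp add: pos_le_divide_eq)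
  thus ?thesis using \<phi>1 by (intro exI[of _ \<phi>]) auto
qed

lemma Phi_props:
  assumes "c \<ge> 0"
  shows "Phi g c \<ge> 0" "Rmean g (Phi g c) = c"
proof -
  obtain \<phi>1 where \<phi>1: "\<phi>1 \<ge> 0" "Rmean g \<phi>1 \<ge> c" using Rmean_unbounded[OF assms] by blast
  define f where "f \<phi> = Aw \<phi> / Zpart g \<phi>" for \<phi>
  have f0: "f 0 = 0" using Rmean_0 Rmean_eq'[of 0] unfolding f_def by simp
  have "\<exists>x. 0 \<le> x \<and> x \<le> \<phi>1 \<and> f x = c"
  proof (rule IVT)
    show "f 0 \<le> c" using f0 assms by simp
    show "c \<le> f \<phi>1" using \<phi>1 Rmean_eq'[of \<phi>1] unfolding f_def by simp
    show "\<forall>x. 0 \<le> x \<and> x \<le> \<phi>1 \<longrightarrow> isCont f x"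
      unfolding f_def using isCont_Aw isCont_Z Z_pos
      by (auto intro!: isCont_divide simp del: Zpart_eq) (metis less_irrefl)
  qed (use \<phi>1 in simp)
  then obtain \<phi> where \<phi>: "\<phi> \<ge> 0" "Rmean g \<phi> = c"
    using Rmean_eq' unfolding f_def by force
  have uniq: "\<phi>' = \<phi>" if "\<phi>' \<ge> 0" "Rmean g \<phi>' = c" for \<phi>'
  proof (rule ccontr)
    assume "\<phi>' \<noteq> \<phi>"
    hence "\<phi>' < \<phi> \<or> \<phi> < \<phi>'" by linarith
    thus False using Rmean_strict_mono[of \<phi>' \<phi>] Rmean_strict_mono[of \<phi> \<phi>'] that \<phi> by auto
  qed
  have "Phi g c = \<phi>" unfolding Phi_def
  proof (rule the_equality)
    show "0 \<le> \<phi> \<and> Rmean g \<phi> = c" using \<phi> by simp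
    fix \<phi>' assume "0 \<le> \<phi>' \<and> Rmean g \<phi>' = c"
    thus "\<phi>' = \<phi>" using uniq by blast
  qed
  thus "Phi g c \<ge> 0" "Rmean g (Phi g c) = c" using \<phi> by auto
qed

lemma Phi_0: "Phi g 0 = 0"
proof -
  have "Rmean g (Phi g 0) = 0" "Phi g 0 \<ge> 0" using Phi_props[of 0] by auto
  thus ?thesis using Rmean_strict_mono[of 0 "Phi g 0"] Rmean_0 by force
qed

lemma Phi_pos: "c > 0 \<Longrightarrow> Phi g c > 0"
  using Phi_props[of c] Rmean_0 by (cases "Phi g c = 0") auto

end


context galpha
begin

lemma w_upper_decay:
  assumes "\<phi> \<ge> 0" "0 < \<rho>" "\<phi> \<le> \<rho> * g (Suc m)"
  shows "w \<phi> (m + i) \<le> \<rho> ^ i * w \<phi> m"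
proof (induction i)
  case 0 thus ?case by simp
next
  case (Suc i)
  have gp: "g (Suc (m + i)) > 0" by (rule g_pos) simp
  have "g (Suc m) \<le> g (Suc (m + i))" by (rule g_mono) simp
  hence "\<phi> \<le> \<rho> * g (Suc (m + i))" using assms(2,3) by (smt (verit) mult_left_mono)
  hence r: "\<phi> / g (Suc (m + i)) \<le> \<rho>" using gp by (simp add: divide_le_eq)
  have "w \<phi> (m + Suc i) = w \<phi> (m + i) * (\<phi> / g (Suc (m + i)))" by (simp add: w_Suc)
  also have "\<dots> \<le> w \<phi> (m + i) * \<rho>"
    using r w_nonneg[OF assms(1)] by (intro mult_left_mono) auto
  also have "\<dots> \<le> \<rho> ^ i * w \<phi> m * \<rho>" using Suc assms(2) by (intro mult_right_mono) auto
  finally show ?case by (simp add: mult_ac)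
qed

lemma upper_tail:
  assumes "\<phi> \<ge> 0" "0 < \<rho>" "\<rho> < 1" "\<phi> \<le> \<rho> * g (Suc m)"
  shows "measure_pmf.prob (Ppmf g \<phi>) {n. m + k \<le> n} \<le> \<rho> ^ k / (1 - \<rho>)"
proof -
  define b where "b n = (if m + k \<le> n then \<rho> ^ (n - m) else 0)" for n
  have "(\<lambda>i. b (i + (m + k))) = (\<lambda>i. \<rho> ^ k * \<rho> ^ i)"
    by (auto simp: b_def fun_eq_iff power_add)
  moreover have "(\<lambda>i. \<rho> ^ k * \<rho> ^ i) sums (\<rho> ^ k * (1 / (1 - \<rho>)))"
    by (intro sums_mult geometric_sums) (use assms in auto)
  ultimately have "(\<lambda>i. b (i + (m + k))) sums (\<rho> ^ k / (1 - \<rho>))" by simp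
  moreover have "(\<Sum>i<m + k. b i) = 0" by (auto simp: b_def)
  ultimately have bs: "b sums (\<rho> ^ k / (1 - \<rho>))" by (simp add: sums_iff_shift)
  have le: "Pgc g \<phi> n * indicator {n. m + k \<le> n} n \<le> b n" for n
  proof (cases "m + k \<le> n")
    case True
    then obtain i where n: "n = m + i" by (metis le_add1 le_iff_add le_trans)
    have "Pgc g \<phi> n = w \<phi> (m + i) / Zpart g \<phi>" by (simp add: Pgc_eq n)
    also have "\<dots> \<le> \<rho> ^ i * w \<phi> m / Zpart g \<phi>"
      using w_upper_decay[OF assms(1,2,4)] Z_pos[OF assms(1)] by (intro divide_right_mono) auto
    also have "\<dots> = \<rho> ^ i * Pgc g \<phi> m" by (simp add: Pgc_eq)
    also have "\<dots> \<le> \<rho> ^ i" using Pgc_le1[OF assms(1), of m] assms(2)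
      by (simp add: mult_left_le)
    finally show ?thesis using True by (simp add: b_def n)
  qed (auto simp: b_def)
  show ?thesis by (rule sums_le[OF le Ppmf_prob_sums[OF assms(1)] bs])
qed

lemma w_lower_decay:
  assumes "\<phi> > 0" "0 < \<rho>" "g m \<le> \<rho> * \<phi>"
  shows "j \<le> m \<Longrightarrow> w \<phi> (m - j) \<le> \<rho> ^ j * w \<phi> m"
proof (induction j)
  case 0 thus ?case by simp
next
  case (Suc j)
  define i where "i = m - Suc j"
  have si: "Suc i = m - j" using Suc.prems unfolding i_def by simp
  have gp: "g (Suc i) > 0" by (rule g_pos) simp
  have "g (Suc i) \<le> g m" by (rule g_mono) (simp add: si)
  hence gl: "g (Suc i) \<le> \<rho> * \<phi>" using assms(3) by simp
  have "w \<phi> (Suc i) = w \<phi> i * (\<phi> / g (Suc i))" by (rule w_Suc)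
  hence "w \<phi> i = w \<phi> (Suc i) * (g (Suc i) / \<phi>)" using gp assms(1) by (simp add: field_simps)
  also have "\<dots> \<le> w \<phi> (Suc i) * \<rho>"
    using gl assms(1) w_nonneg[of \<phi> "Suc i"] by (intro mult_left_mono) (auto simp: divide_le_eq)
  also have "\<dots> \<le> \<rho> ^ j * w \<phi> m * \<rho>"
    using Suc.IH Suc.prems assms(2) si by (intro mult_right_mono) auto
  finally show ?case by (simp add: i_def mult_ac)
qed

lemma lower_tail:
  assumes "\<phi> > 0" "0 < \<rho>" "\<rho> < 1" "g m \<le> \<rho> * \<phi>"
  shows "measure_pmf.prob (Ppmf g \<phi>) {n. n + k \<le> m} \<le> \<rho> ^ k / (1 - \<rho>)"
proof (cases "k \<le> m")
  case False
  hence "{n. n + k \<le> m} = {}" by auto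
  thus ?thesis using assms by simp
next
  case True
  define M where "M = m - k"
  have A: "{n. n + k \<le> m} = {..<Suc M}" unfolding M_def using True by auto
  have "measure_pmf.prob (Ppmf g \<phi>) {n. n + k \<le> m} = (\<Sum>n<Suc M. Pgc g \<phi> n)"
    unfolding A using assms(1) by (simp add: measure_measure_pmf_finite pmf_Ppmf)
  also have "\<dots> \<le> (\<Sum>n<Suc M. \<rho> ^ k * \<rho> ^ (Suc M - Suc n))"
  proof (intro sum_mono)
    fix n assume "n \<in> {..<Suc M}"
    hence n: "n \<le> M" by simp
    have "Pgc g \<phi> n = w \<phi> (m - (m - n)) / Zpart g \<phi>" using n True by (simp add: Pgc_eq M_def)
    also have "\<dots> \<le> \<rho> ^ (m - n) * w \<phi> m / Zpart g \<phi>"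
      using w_lower_decay[OF assms(1,2,4), of "m - n"] Z_pos[of \<phi>] assms(1)
      by (intro divide_right_mono) auto
    also have "\<dots> = \<rho> ^ (m - n) * Pgc g \<phi> m" by (simp add: Pgc_eq)
    also have "\<dots> \<le> \<rho> ^ (m - n)" using Pgc_le1[of \<phi> m] assms by (simp add: mult_left_le)
    also have "m - n = k + (Suc M - Suc n)" using n True unfolding M_def by simp
    finally show "Pgc g \<phi> n \<le> \<rho> ^ k * \<rho> ^ (Suc M - Suc n)" by (simp add: power_add)
  qed
  also have "\<dots> = \<rho> ^ k * (\<Sum>n<Suc M. \<rho> ^ n)"
  proof -
    have "(\<Sum>n<Suc M. \<rho> ^ (Suc M - Suc n)) = (\<Sum>n<Suc M. \<rho> ^ n)"
      by (rule sum.nat_diff_reindex)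
    thus ?thesis by (simp add: sum_distrib_left[symmetric])
  qed
  also have "(\<Sum>n<Suc M. \<rho> ^ n) = (1 - \<rho> ^ Suc M) / (1 - \<rho>)"
    using assms by (subst sum_gp_strict) simp
  also have "\<dots> \<le> 1 / (1 - \<rho>)" using assms by (intro divide_right_mono) auto
  finally show ?thesis using assms by (simp add: mult_left_mono)
qed

end


lemma nat_ceil_bounds:
  fixes x :: real
  assumes "x \<ge> 0"
  shows "x \<le> real (nat \<lceil>x\<rceil>)" "real (nat \<lceil>x\<rceil>) \<le> x + 1"
proof -
  have "real (nat \<lceil>x\<rceil>) = of_int \<lceil>x\<rceil>" using assms by simp
  thus "x \<le> real (nat \<lceil>x\<rceil>)" "real (nat \<lceil>x\<rceil>) \<le> x + 1" by simp_all
qed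

lemma nat_floor_bounds:
  fixes x :: real
  assumes "x \<ge> 0"
  shows "real (nat \<lfloor>x\<rfloor>) \<le> x" "x - 1 < real (nat \<lfloor>x\<rfloor>)"
proof -
  have "real (nat \<lfloor>x\<rfloor>) = of_int \<lfloor>x\<rfloor>" using assms by simp
  thus "real (nat \<lfloor>x\<rfloor>) \<le> x" "x - 1 < real (nat \<lfloor>x\<rfloor>)" by simp_all
qed

lemma nat_floor_le_max: "real (nat \<lfloor>x\<rfloor>) \<le> max 0 (x::real)"
  by (cases "x \<ge> 0") (auto simp: nat_floor_bounds)

lemma ceil_ratio:
  fixes s :: "nat \<Rightarrow> real"
  assumes s: "filterlim s at_top sequentially" and a: "a > 0"
  shows "((\<lambda>N. real (nat \<lceil>a * s N\<rceil>) / s N) \<longlongrightarrow> a) sequentially"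
proof (rule tendsto_sandwich)
  have inv: "((\<lambda>N. inverse (s N)) \<longlongrightarrow> 0) sequentially" by (rule tendsto_inverse_0_at_top[OF s])
  show "((\<lambda>N. a) \<longlongrightarrow> a) sequentially" by simp
  show "((\<lambda>N. a + inverse (s N)) \<longlongrightarrow> a) sequentially" using tendsto_add[OF tendsto_const inv] by simp
  have ev: "eventually (\<lambda>N. s N > 0) sequentially" using s by (simp add: filterlim_at_top_dense)
  show "eventually (\<lambda>N. a \<le> real (nat \<lceil>a * s N\<rceil>) / s N) sequentially"
    using ev
  proof eventually_elim
    case (elim N)
    have "a * s N \<le> real (nat \<lceil>a * s N\<rceil>)" using a elim by (intro nat_ceil_bounds) simp
    thus ?case using elim by (simp add: le_divide_eq)
  qed
  show "eventually (\<lambda>N. real (nat \<lceil>a * s N\<rceil>) / s N \<le> a + inverse (s N)) sequentially"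
    using ev
  proof eventually_elim
    case (elim N)
    have "real (nat \<lceil>a * s N\<rceil>) \<le> a * s N + 1" using a elim by (intro nat_ceil_bounds) simp
    hence "real (nat \<lceil>a * s N\<rceil>) / s N \<le> (a * s N + 1) / s N"
      using elim by (intro divide_right_mono) auto
    also have "(a * s N + 1) / s N = a + inverse (s N)" using elim by (simp add: field_simps)
    finally show ?case .
  qed
qed

lemma floor_ratio:
  fixes s :: "nat \<Rightarrow> real"
  assumes s: "filterlim s at_top sequentially" and a: "a > 0"
  shows "((\<lambda>N. real (nat \<lfloor>a * s N\<rfloor>) / s N) \<longlongrightarrow> a) sequentially"
proof (rule tendsto_sandwich)
  have inv: "((\<lambda>N. inverse (s N)) \<longlongrightarrow> 0) sequentially" by (rule tendsto_inverse_0_at_top[OF s])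
  show "((\<lambda>N. a - inverse (s N)) \<longlongrightarrow> a) sequentially" using tendsto_diff[OF tendsto_const inv] by simp
  show "((\<lambda>N. a) \<longlongrightarrow> a) sequentially" by simp
  have ev: "eventually (\<lambda>N. s N > 0) sequentially" using s by (simp add: filterlim_at_top_dense)
  show "eventually (\<lambda>N. real (nat \<lfloor>a * s N\<rfloor>) / s N \<le> a) sequentially"
    using ev
  proof eventually_elim
    case (elim N)
    have "real (nat \<lfloor>a * s N\<rfloor>) \<le> a * s N" using a elim by (intro nat_floor_bounds) simp
    thus ?case using elim by (simp add: divide_le_eq)
  qed
  show "eventually (\<lambda>N. a - inverse (s N) \<le> real (nat \<lfloor>a * s N\<rfloor>) / s N) sequentially"
    using ev
  proof eventually_elim
    case (elim N)
    have "a * s N - 1 \<le> real (nat \<lfloor>a * s N\<rfloor>)" using a elim nat_floor_bounds(2)[of "a * s N"] by simp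
    hence "(a * s N - 1) / s N \<le> real (nat \<lfloor>a * s N\<rfloor>) / s N"
      using elim by (intro divide_right_mono) auto
    moreover have "(a * s N - 1) / s N = a - inverse (s N)" using elim by (simp add: field_simps)
    ultimately show ?case by simp
  qed
qed

context galpha
begin

lemma g_ratio_lim:
  fixes s :: "nat \<Rightarrow> real" and n :: "nat \<Rightarrow> nat"
  assumes s: "filterlim s at_top sequentially" and a: "a > 0"
    and r: "((\<lambda>N. real (n N) / s N) \<longlongrightarrow> a) sequentially"
  shows "((\<lambda>N. g (n N) / s N powr \<alpha>) \<longlongrightarrow> a powr \<alpha>) sequentially"
proof -
  have ev: "eventually (\<lambda>N. s N > 0) sequentially" using s by (simp add: filterlim_at_top_dense)
  have nr: "filterlim (\<lambda>N. real (n N)) at_top sequentially"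
  proof -
    have L: "filterlim (\<lambda>N. (real (n N) / s N) * s N) at_top sequentially"
      by (rule filterlim_tendsto_pos_mult_at_top[OF r a s])
    have E: "eventually (\<lambda>N. (real (n N) / s N) * s N = real (n N)) sequentially"
      using ev by eventually_elim simp
    show ?thesis using filterlim_cong[OF refl refl E] L by simp
  qed
  have n_top: "filterlim n at_top sequentially"
    using nr by (simp add: filterlim_real_sequentially filterlim_sequentially_iff_filterlim_real)
  have 1: "((\<lambda>N. g (n N) / real (n N) powr \<alpha>) \<longlongrightarrow> 1) sequentially"
    by (rule filterlim_compose[OF g_lim n_top])
  have 2: "((\<lambda>N. (real (n N) / s N) powr \<alpha>) \<longlongrightarrow> a powr \<alpha>) sequentially"
    by (rule tendsto_powr[OF r tendsto_const]) (use a in simp)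
  have L: "((\<lambda>N. g (n N) / real (n N) powr \<alpha> * (real (n N) / s N) powr \<alpha>) \<longlongrightarrow> 1 * a powr \<alpha>) sequentially"
    by (rule tendsto_mult[OF 1 2])
  have E: "eventually (\<lambda>N. g (n N) / real (n N) powr \<alpha> * (real (n N) / s N) powr \<alpha>
                      = g (n N) / s N powr \<alpha>) sequentially"
  proof -
    have "eventually (\<lambda>N. real (n N) > 0) sequentially" using nr[unfolded filterlim_at_top_dense, rule_format, of 0] by simp
    with ev show ?thesis
    proof eventually_elim
      case (elim N)
      thus ?case by (simp add: powr_divide)
    qed
  qed
  show ?thesis using filterlim_cong[OF refl refl E] L by simp
qed

end


lemma k_top:
  fixes s :: "nat \<Rightarrow> real" and e :: real
  assumes s: "filterlim s at_top sequentially" and e: "e > 0"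
  shows "filterlim (\<lambda>N. nat \<lfloor>e * s N - 1\<rfloor>) at_top sequentially"
proof -
  have "filterlim (\<lambda>N. e * s N) at_top sequentially"
    using filterlim_tendsto_pos_mult_at_top[OF tendsto_const e s] .
  hence "filterlim (\<lambda>N. (-2) + e * s N) at_top sequentially"
    by (rule filterlim_tendsto_add_at_top[OF tendsto_const])
  hence "filterlim (\<lambda>N. real (nat \<lfloor>e * s N - 1\<rfloor>)) at_top sequentially"
  proof (rule filterlim_at_top_mono)
    show "\<forall>\<^sub>F x in sequentially. - 2 + e * s x \<le> real (nat \<lfloor>e * s x - 1\<rfloor>)"
    proof (intro always_eventually allI)
      fix x
      have "e * s x - 1 - 1 < real_of_int \<lfloor>e * s x - 1\<rfloor>" by (rule real_of_int_floor_gt_diff_one)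
      moreover have "real_of_int \<lfloor>e * s x - 1\<rfloor> \<le> real (nat \<lfloor>e * s x - 1\<rfloor>)" by simp
      ultimately show "- 2 + e * s x \<le> real (nat \<lfloor>e * s x - 1\<rfloor>)" by simp
    qed
  qed
  thus ?thesis by (simp add: filterlim_real_sequentially filterlim_sequentially_iff_filterlim_real)
qed

lemma geom_k_lim:
  fixes s :: "nat \<Rightarrow> real" and e \<rho> :: real
  assumes s: "filterlim s at_top sequentially" and e: "e > 0" and \<rho>: "0 < \<rho>" "\<rho> < 1"
  shows "((\<lambda>N. \<rho> ^ nat \<lfloor>e * s N - 1\<rfloor> / (1 - \<rho>)) \<longlongrightarrow> 0) sequentially"
proof -
  have "((\<lambda>n. \<rho> ^ n) \<longlongrightarrow> 0) sequentially" by (rule LIMSEQ_power_zero) (use \<rho> in simp)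
  hence "((\<lambda>N. \<rho> ^ nat \<lfloor>e * s N - 1\<rfloor>) \<longlongrightarrow> 0) sequentially"
    by (rule filterlim_compose[OF _ k_top[OF s e]])
  thus ?thesis using tendsto_divide[OF _ tendsto_const, of _ 0 sequentially "1 - \<rho>"] \<rho> by simp
qed

context galpha
begin

lemma GU:
  fixes s \<phi> :: "nat \<Rightarrow> real" and a e \<rho> :: real
  assumes s: "filterlim s at_top sequentially" and a: "a > 0" and e: "e > 0"
    and \<rho>: "0 < \<rho>" "\<rho> < 1" and \<phi>0: "\<And>N. \<phi> N \<ge> 0"
    and ev: "eventually (\<lambda>N. \<phi> N \<le> \<rho> * g (nat \<lceil>a * s N\<rceil>)) sequentially"
  shows "((\<lambda>N. measure_pmf.prob (Ppmf g (\<phi> N)) {n. real n > (a + e) * s N}) \<longlongrightarrow> 0) sequentially"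
proof (rule tendsto_sandwich[OF _ _ tendsto_const geom_k_lim[OF s e \<rho>]])
  show "\<forall>\<^sub>F N in sequentially. 0 \<le> measure_pmf.prob (Ppmf g (\<phi> N)) {n. real n > (a + e) * s N}"
    by simp
  have ev1: "eventually (\<lambda>N. e * s N \<ge> 1) sequentially"
    using filterlim_tendsto_pos_mult_at_top[OF tendsto_const e s]
    by (simp add: filterlim_at_top)
  have ev2: "eventually (\<lambda>N. s N > 0) sequentially" using s by (simp add: filterlim_at_top_dense)
  show "\<forall>\<^sub>F N in sequentially. measure_pmf.prob (Ppmf g (\<phi> N)) {n. real n > (a + e) * s N}
          \<le> \<rho> ^ nat \<lfloor>e * s N - 1\<rfloor> / (1 - \<rho>)"
    using ev ev1 ev2
  proof eventually_elim
    case (elim N)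
    define m where "m = nat \<lceil>a * s N\<rceil>"
    define k where "k = nat \<lfloor>e * s N - 1\<rfloor>"
    have mb: "real m \<le> a * s N + 1" unfolding m_def using a elim by (intro nat_ceil_bounds) simp
    have kb: "real k \<le> e * s N - 1" unfolding k_def using elim nat_floor_bounds(1)[of "e * s N - 1"] by simp
    have "g m \<le> g (Suc m)" by (rule g_mono) simp
    hence c: "\<phi> N \<le> \<rho> * g (Suc m)" using elim \<rho> unfolding m_def
      by (smt (verit) mult_left_mono)
    have "{n. real n > (a + e) * s N} \<subseteq> {n. m + k \<le> n}"
    proof safe
      fix n assume "real n > (a + e) * s N"
      hence "real (m + k) < real n" using mb kb by (simp add: algebra_simps)
      thus "m + k \<le> n" by simp
    qed
    hence "measure_pmf.prob (Ppmf g (\<phi> N)) {n. real n > (a + e) * s N}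
           \<le> measure_pmf.prob (Ppmf g (\<phi> N)) {n. m + k \<le> n}"
      by (intro measure_pmf.finite_measure_mono) auto
    also have "\<dots> \<le> \<rho> ^ k / (1 - \<rho>)" by (rule upper_tail[OF \<phi>0 \<rho> c])
    finally show ?case unfolding k_def .
  qed
qed

lemma GL:
  fixes s \<phi> :: "nat \<Rightarrow> real" and a e \<rho> :: real
  assumes s: "filterlim s at_top sequentially" and a: "a > 0" and e: "e > 0"
    and \<rho>: "0 < \<rho>" "\<rho> < 1"
    and ev: "eventually (\<lambda>N. \<phi> N > 0 \<and> g (nat \<lfloor>a * s N\<rfloor>) \<le> \<rho> * \<phi> N) sequentially"
  shows "((\<lambda>N. measure_pmf.prob (Ppmf g (\<phi> N)) {n. real n < (a - e) * s N}) \<longlongrightarrow> 0) sequentially"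
proof (rule tendsto_sandwich[OF _ _ tendsto_const geom_k_lim[OF s e \<rho>]])
  show "\<forall>\<^sub>F N in sequentially. 0 \<le> measure_pmf.prob (Ppmf g (\<phi> N)) {n. real n < (a - e) * s N}"
    by simp
  have ev2: "eventually (\<lambda>N. s N > 0) sequentially" using s by (simp add: filterlim_at_top_dense)
  have ev1: "eventually (\<lambda>N. e * s N \<ge> 1) sequentially"
    using filterlim_tendsto_pos_mult_at_top[OF tendsto_const e s]
    by (simp add: filterlim_at_top)
  show "\<forall>\<^sub>F N in sequentially. measure_pmf.prob (Ppmf g (\<phi> N)) {n. real n < (a - e) * s N}
          \<le> \<rho> ^ nat \<lfloor>e * s N - 1\<rfloor> / (1 - \<rho>)"
    using ev ev2 ev1
  proof eventually_elim
    case (elim N)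
    define m where "m = nat \<lfloor>a * s N\<rfloor>"
    define k where "k = nat \<lfloor>e * s N - 1\<rfloor>"
    have mb: "a * s N - 1 < real m" unfolding m_def using a elim nat_floor_bounds(2)[of "a * s N"] by simp
    have kb: "real k \<le> max 0 (e * s N - 1)" unfolding k_def by (rule nat_floor_le_max)
    have "{n. real n < (a - e) * s N} \<subseteq> {n. n + k \<le> m}"
    proof safe
      fix n assume n: "real n < (a - e) * s N"
      have "real k \<le> e * s N - 1" using kb elim by simp
      hence "real (n + k) < real m" using n mb by (simp add: algebra_simps)
      thus "n + k \<le> m" by simp
    qed
    hence "measure_pmf.prob (Ppmf g (\<phi> N)) {n. real n < (a - e) * s N}
           \<le> measure_pmf.prob (Ppmf g (\<phi> N)) {n. n + k \<le> m}"
      by (intro measure_pmf.finite_measure_mono) auto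
    also have "\<dots> \<le> \<rho> ^ k / (1 - \<rho>)" using elim unfolding m_def by (intro lower_tail \<rho>) auto
    finally show ?case unfolding k_def .
  qed
qed

end


context galpha
begin

lemma C1:
  fixes s \<phi> :: "nat \<Rightarrow> real" and \<epsilon> :: real
  assumes s: "filterlim s at_top sequentially" and \<phi>: "\<And>N. \<phi> N = s N powr \<alpha>" and \<epsilon>: "\<epsilon> > 0"
  shows "((\<lambda>N. measure_pmf.prob (Ppmf g (\<phi> N)) {n. \<bar>real n - s N\<bar> > \<epsilon> * s N}) \<longlongrightarrow> 0) sequentially"
proof -
  define e where "e = min \<epsilon> (1/2)"
  have e: "e > 0" "e \<le> 1/2" "e \<le> \<epsilon>" using \<epsilon> unfolding e_def by auto
  have evs: "eventually (\<lambda>N. s N > 0) sequentially" using s by (simp add: filterlim_at_top_dense)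
  have \<phi>0: "\<phi> N \<ge> 0" for N unfolding \<phi> by simp
  define a where "a = 1 + e/2"
  have a1: "a > 1" using e unfolding a_def by simp
  have apos: "a > 0" using a1 by simp
  have aa: "a powr \<alpha> > 1" using a1 alpha_pos by simp
  define \<rho> where "\<rho> = 2 / (1 + a powr \<alpha>)"
  have \<rho>: "0 < \<rho>" "\<rho> < 1" using aa unfolding \<rho>_def by (auto simp: field_simps)
  have lim_u: "((\<lambda>N. g (nat \<lceil>a * s N\<rceil>) / s N powr \<alpha>) \<longlongrightarrow> a powr \<alpha>) sequentially"
    by (rule g_ratio_lim[OF s apos ceil_ratio[OF s apos]])
  have "eventually (\<lambda>N. g (nat \<lceil>a * s N\<rceil>) / s N powr \<alpha> > (1 + a powr \<alpha>) / 2) sequentially"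
    by (rule order_tendstoD(1)[OF lim_u]) (use aa in simp)
  hence evu: "eventually (\<lambda>N. \<phi> N \<le> \<rho> * g (nat \<lceil>a * s N\<rceil>)) sequentially"
    using evs
  proof eventually_elim
    case (elim N)
    have sp: "s N powr \<alpha> > 0" using elim by simp
    hence "(1 + a powr \<alpha>) / 2 * s N powr \<alpha> < g (nat \<lceil>a * s N\<rceil>)"
      using elim by (simp add: less_divide_eq)
    hence "\<rho> * ((1 + a powr \<alpha>) / 2 * s N powr \<alpha>) \<le> \<rho> * g (nat \<lceil>a * s N\<rceil>)"
      using \<rho> by (intro mult_left_mono) auto
    moreover have "\<rho> * ((1 + a powr \<alpha>) / 2 * s N powr \<alpha>) = \<phi> N"
      unfolding \<rho>_def \<phi> using aa by (simp add: field_simps)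
    ultimately show ?case by simp
  qed
  have U: "((\<lambda>N. measure_pmf.prob (Ppmf g (\<phi> N)) {n. real n > (a + e/2) * s N}) \<longlongrightarrow> 0) sequentially"
    by (rule GU[OF s apos _ \<rho> \<phi>0 evu]) (use e in simp)
  define b where "b = 1 - e/2"
  have b: "b > 0" "b < 1" using e unfolding b_def by auto
  have bb: "b powr \<alpha> < 1" using powr_less_mono2[OF alpha_pos _ b(2)] b by simp
  have bb0: "b powr \<alpha> > 0" using b by simp
  define \<sigma> where "\<sigma> = (1 + b powr \<alpha>) / 2"
  have \<sigma>: "0 < \<sigma>" "\<sigma> < 1" "b powr \<alpha> < \<sigma>" using bb bb0 unfolding \<sigma>_def by (auto simp del: powr_gt_zero)
  have lim_l: "((\<lambda>N. g (nat \<lfloor>b * s N\<rfloor>) / s N powr \<alpha>) \<longlongrightarrow> b powr \<alpha>) sequentially"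
    by (rule g_ratio_lim[OF s b(1) floor_ratio[OF s b(1)]])
  have "eventually (\<lambda>N. g (nat \<lfloor>b * s N\<rfloor>) / s N powr \<alpha> < \<sigma>) sequentially"
    by (rule order_tendstoD(2)[OF lim_l \<sigma>(3)])
  hence evl: "eventually (\<lambda>N. \<phi> N > 0 \<and> g (nat \<lfloor>b * s N\<rfloor>) \<le> \<sigma> * \<phi> N) sequentially"
    using evs
  proof eventually_elim
    case (elim N)
    have sp: "s N powr \<alpha> > 0" using elim by simp
    hence "g (nat \<lfloor>b * s N\<rfloor>) < \<sigma> * s N powr \<alpha>" using elim by (simp add: divide_less_eq)
    thus ?case using sp unfolding \<phi> by simp
  qed
  have L: "((\<lambda>N. measure_pmf.prob (Ppmf g (\<phi> N)) {n. real n < (b - e/2) * s N}) \<longlongrightarrow> 0) sequentially"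
    by (rule GL[OF s b(1) _ \<sigma>(1,2) evl]) (use e in simp)
  have ae: "a + e/2 = 1 + e" "b - e/2 = 1 - e" unfolding a_def b_def by simp_all
  show ?thesis
  proof (rule tendsto_sandwich[OF _ _ tendsto_const tendsto_add[OF U L, simplified]])
    show "\<forall>\<^sub>F N in sequentially. 0 \<le> measure_pmf.prob (Ppmf g (\<phi> N)) {n. \<epsilon> * s N < \<bar>real n - s N\<bar>}"
      by simp
    show "\<forall>\<^sub>F N in sequentially. measure_pmf.prob (Ppmf g (\<phi> N)) {n. \<epsilon> * s N < \<bar>real n - s N\<bar>}
       \<le> measure_pmf.prob (Ppmf g (\<phi> N)) {n. (a + e / 2) * s N < real n} +
          measure_pmf.prob (Ppmf g (\<phi> N)) {n. real n < (b - e / 2) * s N}"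
      using evs
    proof eventually_elim
      case (elim N)
      have "{n. \<epsilon> * s N < \<bar>real n - s N\<bar>} \<subseteq>
            {n. (a + e / 2) * s N < real n} \<union> {n. real n < (b - e / 2) * s N}"
      proof
        fix n assume "n \<in> {n. \<epsilon> * s N < \<bar>real n - s N\<bar>}"
        moreover have "e * s N \<le> \<epsilon> * s N" using e(3) elim by (intro mult_right_mono) auto
        ultimately have "e * s N < \<bar>real n - s N\<bar>" by simp
        thus "n \<in> {n. (a + e / 2) * s N < real n} \<union> {n. real n < (b - e / 2) * s N}"
          unfolding ae by (auto simp: algebra_simps split: abs_split)
      qed
      hence "measure_pmf.prob (Ppmf g (\<phi> N)) {n. \<epsilon> * s N < \<bar>real n - s N\<bar>}
             \<le> measure_pmf.prob (Ppmf g (\<phi> N)) ({n. (a + e / 2) * s N < real n} \<union> {n. real n < (b - e / 2) * s N})"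
        by (intro measure_pmf.finite_measure_mono) auto
      also have "\<dots> \<le> measure_pmf.prob (Ppmf g (\<phi> N)) {n. (a + e / 2) * s N < real n} +
          measure_pmf.prob (Ppmf g (\<phi> N)) {n. real n < (b - e / 2) * s N}"
        by (rule measure_Un_le) auto
      finally show ?case .
    qed
  qed
qed

lemma C2:
  fixes s \<phi> :: "nat \<Rightarrow> real" and \<epsilon> :: real
  assumes s: "filterlim s at_top sequentially" and \<phi>0: "\<And>N. \<phi> N \<ge> 0"
    and \<phi>: "((\<lambda>N. \<phi> N / s N powr \<alpha>) \<longlongrightarrow> 0) sequentially" and \<epsilon>: "\<epsilon> > 0"
  shows "((\<lambda>N. measure_pmf.prob (Ppmf g (\<phi> N)) {n. real n > \<epsilon> * s N}) \<longlongrightarrow> 0) sequentially"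
proof -
  define a where "a = \<epsilon> / 2"
  have a: "a > 0" using \<epsilon> unfolding a_def by simp
  have aa: "a powr \<alpha> > 0" using a by simp
  have evs: "eventually (\<lambda>N. s N > 0) sequentially" using s by (simp add: filterlim_at_top_dense)
  have lim_u: "((\<lambda>N. g (nat \<lceil>a * s N\<rceil>) / s N powr \<alpha>) \<longlongrightarrow> a powr \<alpha>) sequentially"
    by (rule g_ratio_lim[OF s a ceil_ratio[OF s a]])
  have ev1: "eventually (\<lambda>N. g (nat \<lceil>a * s N\<rceil>) / s N powr \<alpha> > a powr \<alpha> / 2) sequentially"
    by (rule order_tendstoD(1)[OF lim_u]) (use aa in simp)
  have ev2: "eventually (\<lambda>N. \<phi> N / s N powr \<alpha> < a powr \<alpha> / 4) sequentially"
    by (rule order_tendstoD(2)[OF \<phi>]) (use aa in simp)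
  have evu: "eventually (\<lambda>N. \<phi> N \<le> (1/2) * g (nat \<lceil>a * s N\<rceil>)) sequentially"
    using ev1 ev2 evs
  proof eventually_elim
    case (elim N)
    have sp: "s N powr \<alpha> > 0" using elim by simp
    hence "a powr \<alpha> / 2 * s N powr \<alpha> < g (nat \<lceil>a * s N\<rceil>)"
      using elim by (simp add: less_divide_eq)
    moreover have "\<phi> N < a powr \<alpha> / 4 * s N powr \<alpha>" using elim sp by (simp add: divide_less_eq)
    ultimately show ?case by simp
  qed
  have "((\<lambda>N. measure_pmf.prob (Ppmf g (\<phi> N)) {n. real n > (a + a) * s N}) \<longlongrightarrow> 0) sequentially"
    by (rule GU[OF s a a _ _ \<phi>0 evu]) auto
  moreover have "a + a = \<epsilon>" unfolding a_def by simp
  ultimately show ?thesis by simp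
qed

end


lemma Pi_comp_integrable:
  fixes h :: "'b \<Rightarrow> real"
  assumes "finite I" "k \<in> I" "integrable (measure_pmf (p k)) h"
  shows "integrable (measure_pmf (Pi_pmf I d p)) (\<lambda>\<xi>. h (\<xi> k))"
proof -
  have "map_pmf (\<lambda>f. f k) (Pi_pmf I d p) = p k" using Pi_pmf_component[OF assms(1), of k d p] assms(2) by simp
  thus ?thesis using assms(3) by (metis integrable_map_pmf_eq)
qed

lemma Pi_comp_expectation:
  fixes h :: "'b \<Rightarrow> real"
  assumes "finite I" "k \<in> I"
  shows "measure_pmf.expectation (Pi_pmf I d p) (\<lambda>\<xi>. h (\<xi> k)) = measure_pmf.expectation (p k) h"
proof -
  have "map_pmf (\<lambda>f. f k) (Pi_pmf I d p) = p k" using Pi_pmf_component[OF assms(1), of k d p] assms(2) by simp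
  thus ?thesis by (metis integral_map_pmf)
qed

lemma Pi_comp_prob:
  assumes "finite I" "k \<in> I"
  shows "measure_pmf.prob (Pi_pmf I d p) {\<xi>. P (\<xi> k)} = measure_pmf.prob (p k) {n. P n}"
proof -
  have "map_pmf (\<lambda>f. f k) (Pi_pmf I d p) = p k" using Pi_pmf_component[OF assms(1), of k d p] assms(2) by simp
  hence "measure_pmf.prob (p k) {n. P n} = measure_pmf.prob (Pi_pmf I d p) ((\<lambda>f. f k) -` {n. P n})"
    by (metis measure_map_pmf)
  thus ?thesis by (simp add: vimage_def)
qed

lemma Pi_cross_expectation:
  fixes hk hl :: "'b \<Rightarrow> real"
  assumes I: "finite I" and kl: "k \<in> I" "l \<in> I" "k \<noteq> l"
    and ik: "integrable (measure_pmf (p k)) hk" and il: "integrable (measure_pmf (p l)) hl"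
  shows "integrable (measure_pmf (Pi_pmf I d p)) (\<lambda>\<xi>. hk (\<xi> k) * hl (\<xi> l))"
    "measure_pmf.expectation (Pi_pmf I d p) (\<lambda>\<xi>. hk (\<xi> k) * hl (\<xi> l))
       = measure_pmf.expectation (p k) hk * measure_pmf.expectation (p l) hl"
proof -
  define H where "H i = (if i = k then hk else hl)" for i
  define X where "X i \<xi> = H i (\<xi> i)" for i and \<xi> :: "'a \<Rightarrow> 'b"
  have ind0: "prob_space.indep_vars (measure_pmf (Pi_pmf I d p)) (\<lambda>_. count_space UNIV) (\<lambda>x f. f x) I" by (rule indep_vars_Pi_pmf[OF I])
  have ind1: "prob_space.indep_vars (measure_pmf (Pi_pmf I d p)) (\<lambda>_. borel) (\<lambda>i \<xi>. H i (\<xi> i)) I"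
    by (rule prob_space.indep_vars_compose2[OF measure_pmf.prob_space_axioms ind0]) auto
  have ind: "prob_space.indep_vars (measure_pmf (Pi_pmf I d p)) (\<lambda>_. borel) X {k, l}"
    unfolding X_def by (rule prob_space.indep_vars_subset[OF measure_pmf.prob_space_axioms ind1]) (use kl in auto)
  have intX: "integrable (measure_pmf (Pi_pmf I d p)) (X i)" if "i \<in> {k, l}" for i
    using that kl ik il unfolding X_def H_def by (auto intro!: Pi_comp_integrable[OF I])
  have prodX: "(\<Prod>i\<in>{k,l}. X i \<xi>) = hk (\<xi> k) * hl (\<xi> l)" for \<xi>
    using kl unfolding X_def H_def by simp
  show "integrable (measure_pmf (Pi_pmf I d p)) (\<lambda>\<xi>. hk (\<xi> k) * hl (\<xi> l))"
    using prob_space.indep_vars_integrable[OF measure_pmf.prob_space_axioms _ ind intX] by (simp add: prodX)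
  have "measure_pmf.expectation (Pi_pmf I d p) (\<lambda>\<xi>. \<Prod>i\<in>{k,l}. X i \<xi>)
        = (\<Prod>i\<in>{k,l}. measure_pmf.expectation (Pi_pmf I d p) (X i))"
    using prob_space.indep_vars_lebesgue_integral[OF measure_pmf.prob_space_axioms _ ind intX] by simp
  also have "\<dots> = measure_pmf.expectation (p k) hk * measure_pmf.expectation (p l) hl"
    using kl unfolding X_def H_def by (simp add: Pi_comp_expectation[OF I])
  finally show "measure_pmf.expectation (Pi_pmf I d p) (\<lambda>\<xi>. hk (\<xi> k) * hl (\<xi> l))
       = measure_pmf.expectation (p k) hk * measure_pmf.expectation (p l) hl"
    by (simp add: prodX)
qed

lemma Pi_sum_sq:
  fixes a :: "'i \<Rightarrow> real" and h :: "'b \<Rightarrow> real"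
  assumes I: "finite I" and A: "A \<subseteq> I" and pq: "\<And>k. k \<in> A \<Longrightarrow> p k = q"
    and ih: "integrable (measure_pmf q) h" and ih2: "integrable (measure_pmf q) (\<lambda>x. h x ^ 2)"
    and e0: "measure_pmf.expectation q h = 0"
  shows "integrable (measure_pmf (Pi_pmf I d p)) (\<lambda>\<xi>. (\<Sum>k\<in>A. a k * h (\<xi> k)) ^ 2)"
    "measure_pmf.expectation (Pi_pmf I d p) (\<lambda>\<xi>. (\<Sum>k\<in>A. a k * h (\<xi> k)) ^ 2)
       = (\<Sum>k\<in>A. a k ^ 2) * measure_pmf.expectation q (\<lambda>x. h x ^ 2)"
proof -
  have fA: "finite A" using A I by (rule finite_subset)
  have sq: "(\<Sum>k\<in>A. a k * h (\<xi> k)) ^ 2 = (\<Sum>k\<in>A. \<Sum>l\<in>A. a k * a l * (h (\<xi> k) * h (\<xi> l)))" for \<xi>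
    by (simp add: power2_eq_square sum_product mult_ac)
  have term_int: "integrable (measure_pmf (Pi_pmf I d p)) (\<lambda>\<xi>. a k * a l * (h (\<xi> k) * h (\<xi> l)))"
    and term_exp: "measure_pmf.expectation (Pi_pmf I d p) (\<lambda>\<xi>. a k * a l * (h (\<xi> k) * h (\<xi> l)))
         = (if k = l then a k ^ 2 * measure_pmf.expectation q (\<lambda>x. h x ^ 2) else 0)"
    if kl: "k \<in> A" "l \<in> A" for k l
  proof -
    have kI: "k \<in> I" "l \<in> I" using kl A by auto
    have "integrable (measure_pmf (Pi_pmf I d p)) (\<lambda>\<xi>. h (\<xi> k) * h (\<xi> l)) \<and>
          measure_pmf.expectation (Pi_pmf I d p) (\<lambda>\<xi>. h (\<xi> k) * h (\<xi> l))
           = (if k = l then measure_pmf.expectation q (\<lambda>x. h x ^ 2) else 0)"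
    proof (cases "k = l")
      case True
      have "integrable (measure_pmf (Pi_pmf I d p)) (\<lambda>\<xi>. h (\<xi> k) ^ 2)"
        by (rule Pi_comp_integrable[OF I kI(1)]) (use ih2 pq kl in simp)
      moreover have "measure_pmf.expectation (Pi_pmf I d p) (\<lambda>\<xi>. h (\<xi> k) ^ 2) = measure_pmf.expectation q (\<lambda>x. h x ^ 2)"
        using Pi_comp_expectation[OF I kI(1), of d p "\<lambda>x. h x ^ 2"] pq kl by simp
      ultimately show ?thesis using True by (simp add: power2_eq_square)
    next
      case False
      have ik: "integrable (measure_pmf (p k)) h" "integrable (measure_pmf (p l)) h" using pq kl ih by auto
      show ?thesis using Pi_cross_expectation[OF I kI False ik, of d] False pq kl e0 by simp
    qed
    thus "integrable (measure_pmf (Pi_pmf I d p)) (\<lambda>\<xi>. a k * a l * (h (\<xi> k) * h (\<xi> l)))"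
      "measure_pmf.expectation (Pi_pmf I d p) (\<lambda>\<xi>. a k * a l * (h (\<xi> k) * h (\<xi> l)))
         = (if k = l then a k ^ 2 * measure_pmf.expectation q (\<lambda>x. h x ^ 2) else 0)"
      by (auto simp: power2_eq_square)
  qed
  show "integrable (measure_pmf (Pi_pmf I d p)) (\<lambda>\<xi>. (\<Sum>k\<in>A. a k * h (\<xi> k)) ^ 2)"
    unfolding sq by (intro Bochner_Integration.integrable_sum term_int)
  have "measure_pmf.expectation (Pi_pmf I d p) (\<lambda>\<xi>. (\<Sum>k\<in>A. a k * h (\<xi> k)) ^ 2)
      = (\<Sum>k\<in>A. \<Sum>l\<in>A. measure_pmf.expectation (Pi_pmf I d p) (\<lambda>\<xi>. a k * a l * (h (\<xi> k) * h (\<xi> l))))"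
    unfolding sq
  proof (subst Bochner_Integration.integral_sum, goal_cases)
    case (1 k)
    thus ?case by (intro Bochner_Integration.integrable_sum term_int)
  next
    case 2
    show ?case
    proof (rule sum.cong[OF refl])
      fix k assume k: "k \<in> A"
      show "measure_pmf.expectation (Pi_pmf I d p) (\<lambda>\<xi>. \<Sum>l\<in>A. a k * a l * (h (\<xi> k) * h (\<xi> l))) =
        (\<Sum>l\<in>A. measure_pmf.expectation (Pi_pmf I d p) (\<lambda>\<xi>. a k * a l * (h (\<xi> k) * h (\<xi> l))))"
        by (rule Bochner_Integration.integral_sum) (rule term_int[OF k])
    qed
  qed
  also have "\<dots> = (\<Sum>k\<in>A. \<Sum>l\<in>A. (if k = l then a k ^ 2 * measure_pmf.expectation q (\<lambda>x. h x ^ 2) else 0))"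
    by (intro sum.cong refl term_exp) 
  also have "\<dots> = (\<Sum>k\<in>A. a k ^ 2 * measure_pmf.expectation q (\<lambda>x. h x ^ 2))"
    using fA by (simp add: sum.delta)
  finally show "measure_pmf.expectation (Pi_pmf I d p) (\<lambda>\<xi>. (\<Sum>k\<in>A. a k * h (\<xi> k)) ^ 2)
       = (\<Sum>k\<in>A. a k ^ 2) * measure_pmf.expectation q (\<lambda>x. h x ^ 2)"
    by (simp add: sum_distrib_right)
qed

lemma Pi_cheb:
  fixes a :: "'i \<Rightarrow> real" and h :: "'b \<Rightarrow> real"
  assumes I: "finite I" and A: "A \<subseteq> I" and pq: "\<And>k. k \<in> A \<Longrightarrow> p k = q"
    and ih: "integrable (measure_pmf q) h" and ih2: "integrable (measure_pmf q) (\<lambda>x. h x ^ 2)"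
    and e0: "measure_pmf.expectation q h = 0" and \<delta>: "\<delta> > 0"
  shows "measure_pmf.prob (Pi_pmf I d p) {\<xi>. \<bar>\<Sum>k\<in>A. a k * h (\<xi> k)\<bar> \<ge> \<delta>}
         \<le> (\<Sum>k\<in>A. a k ^ 2) * measure_pmf.expectation q (\<lambda>x. h x ^ 2) / \<delta> ^ 2"
proof -
  have "{\<xi>. \<bar>\<Sum>k\<in>A. a k * h (\<xi> k)\<bar> \<ge> \<delta>} = {\<xi> \<in> space (measure_pmf (Pi_pmf I d p)). (\<Sum>k\<in>A. a k * h (\<xi> k)) ^ 2 \<ge> \<delta> ^ 2}"
    using \<delta> abs_le_square_iff[of \<delta>] by auto
  also have "measure_pmf.prob (Pi_pmf I d p) \<dots> \<le>
       measure_pmf.expectation (Pi_pmf I d p) (\<lambda>\<xi>. (\<Sum>k\<in>A. a k * h (\<xi> k)) ^ 2) / \<delta> ^ 2"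
    by (rule integral_Markov_inequality_measure[OF Pi_sum_sq(1)[OF I A pq ih ih2 e0]]) (use \<delta> in auto)
  also have "\<dots> = (\<Sum>k\<in>A. a k ^ 2) * measure_pmf.expectation q (\<lambda>x. h x ^ 2) / \<delta> ^ 2"
    by (simp add: Pi_sum_sq(2)[OF I A pq ih ih2 e0])
  finally show ?thesis .
qed


lemma integral_split_N:
  fixes G :: "real \<Rightarrow> real"
  assumes G: "continuous_on {0..1} G" and N: "N > 0" and m: "m \<le> N"
  shows "integral {0..real m / real N} G = (\<Sum>k<m. integral {real k / real N..real (Suc k) / real N} G)"
  using m
proof (induction m)
  case 0 thus ?case by simp
next
  case (Suc m)
  have le1: "real (Suc m) / real N \<le> 1" using Suc.prems N by simp
  have int: "G integrable_on {0..real (Suc m) / real N}"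
    by (rule integrable_continuous_interval, rule continuous_on_subset[OF G]) (use le1 in auto)
  have "real m / real N \<le> real (Suc m) / real N" using N by (intro divide_right_mono) auto
  hence "integral {0..real m / real N} G + integral {real m / real N..real (Suc m) / real N} G
         = integral {0..real (Suc m) / real N} G"
    using Henstock_Kurzweil_Integration.integral_combine[where a=0 and c="real m / real N" and b="real (Suc m) / real N" and f=G] int by simp
  hence "integral {0..real (Suc m) / real N} G
        = integral {0..real m / real N} G + integral {real m / real N..real (Suc m) / real N} G"
    by simp
  also have "integral {0..real m / real N} G = (\<Sum>k<m. integral {real k / real N..real (Suc k) / real N} G)"
    using Suc by simp
  finally show ?case by simp
qed

lemma riemann_lim:
  fixes G :: "real \<Rightarrow> real"
  assumes G: "continuous_on {0..1} G"
  shows "((\<lambda>N. (\<Sum>k<N. G (real k / real N)) / real N) \<longlongrightarrow> integral {0..1} G) sequentially"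
proof (rule tendstoI)
  fix \<epsilon> :: real assume \<epsilon>: "\<epsilon> > 0"
  have uc: "uniformly_continuous_on {0..1} G"
    by (rule compact_uniformly_continuous[OF G compact_Icc])
  obtain d where d: "d > 0" "\<And>x y. x \<in> {0..1} \<Longrightarrow> y \<in> {0..1} \<Longrightarrow> dist y x < d \<Longrightarrow> dist (G y) (G x) < \<epsilon> / 2"
    using uc[unfolded uniformly_continuous_on_def, rule_format, of "\<epsilon>/2"] \<epsilon> by auto
  obtain N0 :: nat where N0: "real N0 > 1 / d" using reals_Archimedean2 by blast
  show "eventually (\<lambda>N. dist ((\<Sum>k<N. G (real k / real N)) / real N) (integral {0..1} G) < \<epsilon>) sequentially"
    using eventually_ge_at_top[of "Suc N0"]
  proof eventually_elim
    case (elim N)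
    have Np: "N > 0" using elim by simp
    have Nd: "1 / real N < d"
    proof -
      have "1 / d < real N" using N0 elim by simp
      thus ?thesis using d(1) Np by (simp add: field_simps)
    qed
    have piece: "\<bar>integral {real k / real N..real (Suc k) / real N} G - G (real k / real N) / real N\<bar> \<le> \<epsilon> / 2 / real N"
      if k: "k < N" for k
    proof -
      define a where "a = real k / real N"
      define b where "b = real (Suc k) / real N"
      have ab: "0 \<le> a" "a \<le> b" "b \<le> 1" "b - a = 1 / real N"
        unfolding a_def b_def using k Np by (auto simp: divide_right_mono diff_divide_distrib[symmetric])
      have cont: "continuous_on {a..b} G" by (rule continuous_on_subset[OF G]) (use ab in auto)
      have "integral {a..b} (\<lambda>x. G x - G a) = integral {a..b} G - (b - a) * G a"
        using ab by (subst integral_diff) (auto intro!: integrable_continuous_interval cont)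
      moreover have "norm (integral {a..b} (\<lambda>x. G x - G a)) \<le> \<epsilon> / 2 * (b - a)"
      proof (rule integral_bound)
        show "continuous_on {a..b} (\<lambda>x. G x - G a)" by (intro continuous_intros cont)
        fix t assume t: "t \<in> {a..b}"
        have "dist t a < d" using t ab Nd by (auto simp: dist_real_def)
        hence "dist (G t) (G a) < \<epsilon> / 2" using d(2)[of a t] t ab by auto
        thus "norm (G t - G a) \<le> \<epsilon> / 2" by (simp add: dist_norm)
      qed (use ab in auto)
      ultimately show ?thesis unfolding a_def[symmetric] b_def[symmetric] using ab by simp
    qed
    have "integral {0..1} G = (\<Sum>k<N. integral {real k / real N..real (Suc k) / real N} G)"
      using integral_split_N[OF G Np order.refl] Np by simp
    hence "\<bar>(\<Sum>k<N. G (real k / real N)) / real N - integral {0..1} G\<bar>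
          = \<bar>\<Sum>k<N. (G (real k / real N) / real N - integral {real k / real N..real (Suc k) / real N} G)\<bar>"
      by (simp add: sum_divide_distrib sum_subtractf)
    also have "\<dots> \<le> (\<Sum>k<N. \<bar>G (real k / real N) / real N - integral {real k / real N..real (Suc k) / real N} G\<bar>)"
      by (rule sum_abs)
    also have "\<dots> \<le> (\<Sum>k<N. \<epsilon> / 2 / real N)"
      by (intro sum_mono) (use piece in \<open>auto simp: abs_minus_commute\<close>)
    also have "\<dots> = \<epsilon> / 2" using Np by simp
    finally show ?case using \<epsilon> by (simp add: dist_real_def)
  qed
qed


definition RNp :: "(nat \<Rightarrow> real) \<Rightarrow> 'j set \<Rightarrow> ('j \<Rightarrow> real) \<Rightarrow> ('j \<Rightarrow> real) \<Rightarrow> ('j \<Rightarrow> real)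
                  \<Rightarrow> real \<Rightarrow> nat \<Rightarrow> nat \<Rightarrow> nat pmf" where
  "RNp g J x \<beta> lam c N = (\<lambda>k. if \<exists>j\<in>J. kjN (x j) N = k
        then (let j = (SOME j. j \<in> J \<and> kjN (x j) N = k)
              in Ppmf g (lam j * real N powr \<beta> j * Phi g c))
        else Ppmf g (Phi g c))"

lemma RN_eq: "RN g J x \<beta> lam c N = Pi_pmf {..<N} 0 (RNp g J x \<beta> lam c N)"
  unfolding RN_def RNp_def ..

lemma RNp_site:
  assumes inj: "inj_on (\<lambda>j. kjN (x j) N) J" and j: "j \<in> J"
  shows "RNp g J x \<beta> lam c N (kjN (x j) N) = Ppmf g (lam j * real N powr \<beta> j * Phi g c)"
proof -
  have "(SOME i. i \<in> J \<and> kjN (x i) N = kjN (x j) N) = j"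
    by (rule some_equality) (use j inj in \<open>auto simp: inj_on_def\<close>)
  thus ?thesis unfolding RNp_def using j by auto
qed

lemma RNp_bulk:
  assumes "k \<notin> (\<lambda>j. kjN (x j) N) ` J"
  shows "RNp g J x \<beta> lam c N k = Ppmf g (Phi g c)"
  using assms unfolding RNp_def by auto

lemma kjN_lt:
  assumes "0 \<le> xj" "xj < 1" "N > 0"
  shows "kjN xj N < N"
proof -
  have "xj * real N < real N" using assms by simp
  hence "\<lfloor>xj * real N\<rfloor> < int N" by (simp add: floor_less_iff)
  thus ?thesis unfolding kjN_def using assms(3) by (simp add: nat_less_iff)
qed

lemma kjN_bounds:
  assumes "0 \<le> xj"
  shows "real (kjN xj N) \<le> xj * real N" "xj * real N - 1 < real (kjN xj N)"
  unfolding kjN_def using nat_floor_bounds[of "xj * real N"] assms by auto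

lemma kjN_ratio:
  assumes "0 \<le> xj"
  shows "((\<lambda>N. real (kjN xj N) / real N) \<longlongrightarrow> xj) sequentially"
proof (rule tendsto_sandwich)
  have inv: "((\<lambda>N. inverse (real N)) \<longlongrightarrow> 0) sequentially" by (rule lim_inverse_n)
  show "((\<lambda>N. xj - inverse (real N)) \<longlongrightarrow> xj) sequentially" using tendsto_diff[OF tendsto_const inv] by simp
  show "((\<lambda>N. xj) \<longlongrightarrow> xj) sequentially" by simp
  show "eventually (\<lambda>N. real (kjN xj N) / real N \<le> xj) sequentially"
    using eventually_gt_at_top[of 0]
  proof eventually_elim
    case (elim N)
    thus ?case using kjN_bounds(1)[OF assms, of N] by (simp add: divide_le_eq)
  qed
  show "eventually (\<lambda>N. xj - inverse (real N) \<le> real (kjN xj N) / real N) sequentially"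
    using eventually_gt_at_top[of 0]
  proof eventually_elim
    case (elim N)
    have "(xj * real N - 1) / real N \<le> real (kjN xj N) / real N"
      using kjN_bounds(2)[OF assms, of N] elim by (intro divide_right_mono) auto
    moreover have "(xj * real N - 1) / real N = xj - inverse (real N)" using elim by (simp add: field_simps)
    ultimately show ?case by simp
  qed
qed

lemma kjN_distinct_eventually:
  assumes "0 \<le> xi" "0 \<le> xj" "xi \<noteq> xj"
  shows "eventually (\<lambda>N. kjN xi N \<noteq> kjN xj N) sequentially"
proof -
  have d: "\<bar>xi - xj\<bar> > 0" using assms by simp
  obtain N0 :: nat where N0: "real N0 > 1 / \<bar>xi - xj\<bar>" using reals_Archimedean2 by blast
  show ?thesis using eventually_ge_at_top[of "Suc N0"]
  proof eventually_elim
    case (elim N)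
    have "1 / \<bar>xi - xj\<bar> < real N" using N0 elim by simp
    hence big: "1 < \<bar>xi - xj\<bar> * real N" using d by (simp add: field_simps)
    show ?case
    proof
      assume eq: "kjN xi N = kjN xj N"
      have "\<bar>xi * real N - xj * real N\<bar> < 1"
        using kjN_bounds[OF assms(1), of N] kjN_bounds[OF assms(2), of N] eq by linarith
      moreover have "\<bar>xi * real N - xj * real N\<bar> = \<bar>xi - xj\<bar> * real N"
        by (simp add: left_diff_distrib[symmetric] abs_mult)
      ultimately show False using big by simp
    qed
  qed
qed

lemma kjN_inj_eventually:
  assumes J: "finite J" and xr: "\<forall>j\<in>J. 0 \<le> x j \<and> x j < 1" and xi: "inj_on x J"
  shows "eventually (\<lambda>N. N > 0 \<and> inj_on (\<lambda>j. kjN (x j) N) J \<and> (\<forall>j\<in>J. kjN (x j) N < N)) sequentially"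
proof -
  have "eventually (\<lambda>N. \<forall>p\<in>J \<times> J. fst p \<noteq> snd p \<longrightarrow> kjN (x (fst p)) N \<noteq> kjN (x (snd p)) N) sequentially"
  proof (rule eventually_ball_finite)
    show "finite (J \<times> J)" using J by simp
    show "\<forall>p\<in>J \<times> J. eventually (\<lambda>N. fst p \<noteq> snd p \<longrightarrow> kjN (x (fst p)) N \<noteq> kjN (x (snd p)) N) sequentially"
    proof
      fix p assume p: "p \<in> J \<times> J"
      show "eventually (\<lambda>N. fst p \<noteq> snd p \<longrightarrow> kjN (x (fst p)) N \<noteq> kjN (x (snd p)) N) sequentially"
      proof (cases "fst p = snd p")
        case False
        have "fst p \<in> J" "snd p \<in> J" using p by auto
        hence "x (fst p) \<noteq> x (snd p)" using inj_on_contraD[OF xi False] by blast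
        hence "eventually (\<lambda>N. kjN (x (fst p)) N \<noteq> kjN (x (snd p)) N) sequentially"
          using p xr by (intro kjN_distinct_eventually) auto
        thus ?thesis by (rule eventually_mono) simp
      qed simp
    qed
  qed
  thus ?thesis using eventually_gt_at_top[of 0]
  proof eventually_elim
    case (elim N)
    have "inj_on (\<lambda>j. kjN (x j) N) J"
      unfolding inj_on_def using elim(1) by fastforce
    moreover have "\<forall>j\<in>J. kjN (x j) N < N" using xr elim(2) by (auto intro: kjN_lt)
    ultimately show ?case using elim by simp
  qed
qed

lemma site_prob:
  assumes inj: "inj_on (\<lambda>j. kjN (x j) N) J" and j: "j \<in> J" and lt: "kjN (x j) N < N"
  shows "measure_pmf.prob (RN g J x \<beta> lam c N) {\<xi>. P (\<xi> (kjN (x j) N))}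
       = measure_pmf.prob (Ppmf g (lam j * real N powr \<beta> j * Phi g c)) {n. P n}"
  unfolding RN_eq using lt
  by (subst Pi_comp_prob) (auto simp: RNp_site[OF inj j])

context galpha
begin

lemma prob_Ppmf0: "measure_pmf.prob (Ppmf g 0) A = (if 0 \<in> A then 1 else 0)"
proof -
  have "(\<lambda>n. Pgc g 0 n * indicator A n) = (\<lambda>n. if n = 0 then (if 0 \<in> A then 1 else 0) else 0)"
    by (auto simp: Pgc_0 fun_eq_iff)
  hence "(\<lambda>n. Pgc g 0 n * indicator A n) sums (if 0 \<in> A then 1 else 0)"
    using sums_single[of 0 "\<lambda>_. if 0 \<in> A then 1 else (0::real)"] by simp
  thus ?thesis using Ppmf_prob_sums[of 0 A] sums_unique2 by auto
qed

end


context galpha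
begin

lemma S1:
  fixes lam \<beta> \<phi>0 \<delta> :: real
  assumes lam: "lam > 0" and \<beta>: "\<beta> > \<alpha>" and \<phi>0: "\<phi>0 \<ge> 0" and \<delta>: "\<delta> > 0"
  shows "((\<lambda>N. measure_pmf.prob (Ppmf g (lam * real N powr \<beta> * \<phi>0))
             {n. \<bar>real N powr (- \<beta> / \<alpha>) * real n - (lam * \<phi>0) powr (1 / \<alpha>)\<bar> > \<delta>}) \<longlongrightarrow> 0) sequentially"
proof (cases "\<phi>0 = 0")
  case True
  thus ?thesis using \<delta> by (simp add: prob_Ppmf0)
next
  case False
  hence \<phi>p: "\<phi>0 > 0" using \<phi>0 by simp
  define a where "a = (lam * \<phi>0) powr (1 / \<alpha>)"
  have a: "a > 0" unfolding a_def using lam \<phi>p by simp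
  have aa: "a powr \<alpha> = lam * \<phi>0" unfolding a_def using lam \<phi>p alpha_pos by (simp add: powr_powr)
  define s where "s N = a * real N powr (\<beta> / \<alpha>)" for N :: nat
  have ba: "\<beta> / \<alpha> > 0" using \<beta> alpha_pos by simp
  have s_top: "filterlim s at_top sequentially"
    unfolding s_def
    by (intro filterlim_tendsto_pos_mult_at_top[OF tendsto_const a]
        filterlim_compose[OF real_powr_at_top[OF ba] filterlim_real_sequentially])
  have s\<phi>: "lam * real N powr \<beta> * \<phi>0 = s N powr \<alpha>" for N
  proof -
    have "s N powr \<alpha> = a powr \<alpha> * (real N powr (\<beta> / \<alpha>)) powr \<alpha>"
      unfolding s_def by (simp add: powr_mult)
    also have "(real N powr (\<beta> / \<alpha>)) powr \<alpha> = real N powr \<beta>"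
      using alpha_pos by (simp add: powr_powr)
    finally show ?thesis using aa by simp
  qed
  have C: "((\<lambda>N. measure_pmf.prob (Ppmf g (s N powr \<alpha>)) {n. \<bar>real n - s N\<bar> > (\<delta> / a) * s N}) \<longlongrightarrow> 0) sequentially"
    by (rule C1[OF s_top _ ]) (use \<delta> a in auto)
  show ?thesis
  proof (rule Lim_transform_eventually[OF C])
    show "eventually (\<lambda>N. measure_pmf.prob (Ppmf g (s N powr \<alpha>)) {n. \<bar>real n - s N\<bar> > (\<delta> / a) * s N}
      = measure_pmf.prob (Ppmf g (lam * real N powr \<beta> * \<phi>0))
             {n. \<bar>real N powr (- \<beta> / \<alpha>) * real n - (lam * \<phi>0) powr (1 / \<alpha>)\<bar> > \<delta>}) sequentially"
      using eventually_gt_at_top[of 0]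
    proof eventually_elim
      case (elim N)
      define P where "P = real N powr (\<beta> / \<alpha>)"
      have P: "P > 0" unfolding P_def using elim by simp
      have Pm: "real N powr (- \<beta> / \<alpha>) = inverse P" unfolding P_def
        by (simp add: powr_minus[symmetric])
      have "{n. \<bar>real n - s N\<bar> > (\<delta> / a) * s N} =
            {n. \<bar>real N powr (- \<beta> / \<alpha>) * real n - (lam * \<phi>0) powr (1 / \<alpha>)\<bar> > \<delta>}"
      proof (intro Collect_cong)
        fix n
        have "real N powr (- \<beta> / \<alpha>) * real n - (lam * \<phi>0) powr (1 / \<alpha>) = (real n - s N) / P"
          unfolding Pm s_def a_def[symmetric] P_def[symmetric] using P by (simp add: field_simps)
        moreover have "(\<delta> / a) * s N = \<delta> * P" unfolding s_def P_def[symmetric] using a by simp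
        ultimately show "(\<bar>real n - s N\<bar> > (\<delta> / a) * s N) =
            (\<bar>real N powr (- \<beta> / \<alpha>) * real n - (lam * \<phi>0) powr (1 / \<alpha>)\<bar> > \<delta>)"
          using P by (simp add: abs_divide pos_less_divide_eq mult.commute)
      qed
      thus ?case by (simp add: s\<phi>)
    qed
  qed
qed

lemma S2:
  fixes lam \<phi>0 \<eta> y0 Bd :: real and yN :: "nat \<Rightarrow> real"
  assumes lam: "lam > 0" and \<phi>0: "\<phi>0 \<ge> 0" and \<eta>: "\<eta> > 0"
    and y: "(yN \<longlongrightarrow> y0) sequentially" and Bd: "\<And>N. \<bar>yN N\<bar> \<le> Bd"
  shows "((\<lambda>N. measure_pmf.prob (Ppmf g (lam * real N powr \<alpha> * \<phi>0))
             {n. \<bar>real n * yN N / real N - (lam * \<phi>0) powr (1 / \<alpha>) * y0\<bar> > \<eta>}) \<longlongrightarrow> 0) sequentially"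
proof (cases "\<phi>0 = 0")
  case True
  thus ?thesis using \<eta> by (simp add: prob_Ppmf0)
next
  case False
  hence \<phi>p: "\<phi>0 > 0" using \<phi>0 by simp
  define a where "a = (lam * \<phi>0) powr (1 / \<alpha>)"
  have a: "a > 0" unfolding a_def using lam \<phi>p by simp
  have aa: "a powr \<alpha> = lam * \<phi>0" unfolding a_def using lam \<phi>p alpha_pos by (simp add: powr_powr)
  have B0: "Bd \<ge> 0" using Bd[of 0] by simp
  define s where "s N = a * real N" for N :: nat
  have s_top: "filterlim s at_top sequentially"
    unfolding s_def by (intro filterlim_tendsto_pos_mult_at_top[OF tendsto_const a] filterlim_real_sequentially)
  have s\<phi>: "lam * real N powr \<alpha> * \<phi>0 = s N powr \<alpha>" for N
    unfolding s_def using aa by (simp add: powr_mult)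
  define \<epsilon> where "\<epsilon> = \<eta> / (2 * (Bd + 1) * a)"
  have \<epsilon>: "\<epsilon> > 0" unfolding \<epsilon>_def using \<eta> a B0 by simp
  have C: "((\<lambda>N. measure_pmf.prob (Ppmf g (s N powr \<alpha>)) {n. \<bar>real n - s N\<bar> > \<epsilon> * s N}) \<longlongrightarrow> 0) sequentially"
    by (rule C1[OF s_top _ \<epsilon>]) simp
  have ev: "eventually (\<lambda>N. dist (yN N) y0 < \<eta> / (2 * a)) sequentially"
    using tendstoD[OF y] \<eta> a by simp
  show ?thesis
  proof (rule tendsto_sandwich[OF _ _ tendsto_const C])
    show "eventually (\<lambda>N. 0 \<le> measure_pmf.prob (Ppmf g (lam * real N powr \<alpha> * \<phi>0))
             {n. \<bar>real n * yN N / real N - (lam * \<phi>0) powr (1 / \<alpha>) * y0\<bar> > \<eta>}) sequentially" by simp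
    show "eventually (\<lambda>N. measure_pmf.prob (Ppmf g (lam * real N powr \<alpha> * \<phi>0))
             {n. \<bar>real n * yN N / real N - (lam * \<phi>0) powr (1 / \<alpha>) * y0\<bar> > \<eta>}
          \<le> measure_pmf.prob (Ppmf g (s N powr \<alpha>)) {n. \<bar>real n - s N\<bar> > \<epsilon> * s N}) sequentially"
      using eventually_gt_at_top[of 0] ev
    proof eventually_elim
      case (elim N)
      have Np: "real N > 0" using elim by simp
      have sub: "{n. \<bar>real n * yN N / real N - (lam * \<phi>0) powr (1 / \<alpha>) * y0\<bar> > \<eta>}
                 \<subseteq> {n. \<bar>real n - s N\<bar> > \<epsilon> * s N}"
      proof (safe, rule ccontr)
        fix n assume big: "\<eta> < \<bar>real n * yN N / real N - (lam * \<phi>0) powr (1 / \<alpha>) * y0\<bar>"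
        assume "\<not> \<epsilon> * s N < \<bar>real n - s N\<bar>"
        hence sm: "\<bar>real n - a * real N\<bar> \<le> \<epsilon> * a * real N" unfolding s_def by (simp add: mult_ac)
        have r: "\<bar>real n / real N - a\<bar> \<le> \<epsilon> * a"
        proof -
          have "real n / real N - a = (real n - a * real N) / real N" using Np by (simp add: field_simps)
          hence "\<bar>real n / real N - a\<bar> = \<bar>real n - a * real N\<bar> / real N" using Np by (simp add: abs_divide)
          also have "\<dots> \<le> \<epsilon> * a * real N / real N" using sm Np by (intro divide_right_mono) auto
          finally show ?thesis using Np by simp
        qed
        have "real n * yN N / real N - a * y0 = (real n / real N - a) * yN N + a * (yN N - y0)"
          by (simp add: algebra_simps)
        hence "\<bar>real n * yN N / real N - a * y0\<bar> \<le> \<bar>real n / real N - a\<bar> * \<bar>yN N\<bar> + a * \<bar>yN N - y0\<bar>"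
          using a by (simp add: abs_mult order_trans[OF abs_triangle_ineq])
        also have "\<dots> \<le> \<epsilon> * a * Bd + a * \<bar>yN N - y0\<bar>"
          using r Bd[of N] a by (intro add_mono mult_mono) auto
        also have "a * \<bar>yN N - y0\<bar> < \<eta> / 2"
          using elim(2) a by (simp add: dist_real_def field_simps)
        also have "\<epsilon> * a * Bd \<le> \<eta> / 2"
        proof -
          have nz: "Bd + 1 \<noteq> 0" using B0 by simp
          have "\<epsilon> * a = \<eta> / (2 * (Bd + 1)) / a * a" unfolding \<epsilon>_def by (simp add: divide_divide_eq_left)
          also have "\<dots> = \<eta> / (2 * (Bd + 1))" using a by simp
          finally have "\<epsilon> * a * Bd = \<eta> * Bd / (2 * (Bd + 1))" by simp
          also have "\<dots> = (\<eta> / 2) * (Bd / (Bd + 1))" by simp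
          also have "\<dots> \<le> (\<eta> / 2) * 1" using B0 \<eta> by (intro mult_left_mono) auto
          finally show ?thesis by simp
        qed
        finally have "\<bar>real n * yN N / real N - a * y0\<bar> < \<eta>" by simp
        thus False using big unfolding a_def by simp
      qed
      show ?case unfolding s\<phi> by (rule measure_pmf.finite_measure_mono[OF sub]) simp
    qed
  qed
qed

lemma S3:
  fixes lam \<beta> \<phi>0 \<eta> Bd :: real and yN :: "nat \<Rightarrow> real"
  assumes lam: "lam > 0" and \<beta>: "\<beta> < \<alpha>" and \<phi>0: "\<phi>0 \<ge> 0" and \<eta>: "\<eta> > 0"
    and Bd: "\<And>N. \<bar>yN N\<bar> \<le> Bd"
  shows "((\<lambda>N. measure_pmf.prob (Ppmf g (lam * real N powr \<beta> * \<phi>0))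
             {n. \<bar>real n * yN N / real N\<bar> > \<eta>}) \<longlongrightarrow> 0) sequentially"
proof -
  have B0: "Bd \<ge> 0" using Bd[of 0] by simp
  define \<epsilon> where "\<epsilon> = \<eta> / (Bd + 1)"
  have \<epsilon>: "\<epsilon> > 0" unfolding \<epsilon>_def using \<eta> B0 by simp
  have lim0: "((\<lambda>N. lam * \<phi>0 * real N powr (\<beta> - \<alpha>)) \<longlongrightarrow> 0) sequentially"
    using tendsto_mult[OF tendsto_const tendsto_neg_powr[OF _ filterlim_real_sequentially], of "\<beta> - \<alpha>" "lam * \<phi>0"] \<beta>
    by simp
  have lim: "((\<lambda>N. lam * real N powr \<beta> * \<phi>0 / real N powr \<alpha>) \<longlongrightarrow> 0) sequentially"
  proof (rule Lim_transform_eventually[OF lim0])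
    show "eventually (\<lambda>N. lam * \<phi>0 * real N powr (\<beta> - \<alpha>) = lam * real N powr \<beta> * \<phi>0 / real N powr \<alpha>) sequentially"
      using eventually_gt_at_top[of 0] by eventually_elim (simp add: powr_diff)
  qed
  have C: "((\<lambda>N. measure_pmf.prob (Ppmf g (lam * real N powr \<beta> * \<phi>0)) {n. real n > \<epsilon> * real N}) \<longlongrightarrow> 0) sequentially"
    by (rule C2[OF filterlim_real_sequentially _ lim \<epsilon>]) (use lam \<phi>0 in simp)
  show ?thesis
  proof (rule tendsto_sandwich[OF _ _ tendsto_const C])
    show "eventually (\<lambda>N. 0 \<le> measure_pmf.prob (Ppmf g (lam * real N powr \<beta> * \<phi>0))
             {n. \<bar>real n * yN N / real N\<bar> > \<eta>}) sequentially" by simp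
    show "eventually (\<lambda>N. measure_pmf.prob (Ppmf g (lam * real N powr \<beta> * \<phi>0))
             {n. \<bar>real n * yN N / real N\<bar> > \<eta>}
          \<le> measure_pmf.prob (Ppmf g (lam * real N powr \<beta> * \<phi>0)) {n. real n > \<epsilon> * real N}) sequentially"
      using eventually_gt_at_top[of 0]
    proof eventually_elim
      case (elim N)
      have Np: "real N > 0" using elim by simp
      have sub: "{n. \<bar>real n * yN N / real N\<bar> > \<eta>} \<subseteq> {n. real n > \<epsilon> * real N}"
      proof (safe, rule ccontr)
        fix n assume big: "\<eta> < \<bar>real n * yN N / real N\<bar>"
        assume "\<not> \<epsilon> * real N < real n"
        hence "real n / real N \<le> \<epsilon>" using Np by (simp add: divide_le_eq)
        have "\<bar>real n * yN N / real N\<bar> = real n / real N * \<bar>yN N\<bar>" using Np by (simp add: abs_mult)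
        also have "\<dots> \<le> \<epsilon> * Bd" using \<open>real n / real N \<le> \<epsilon>\<close> Bd[of N] \<epsilon>
          by (intro mult_mono) auto
        also have "\<epsilon> * Bd < \<eta>"
        proof -
          have nz: "Bd + 1 > 0" using B0 by simp
          have "\<epsilon> * Bd = \<eta> * Bd / (Bd + 1)" unfolding \<epsilon>_def by simp
          also have "\<dots> = \<eta> * (Bd / (Bd + 1))" by simp
          also have "\<dots> < \<eta> * 1" using nz \<eta> by (intro mult_strict_left_mono) auto
          finally show ?thesis by simp
        qed
        finally show False using big by simp
      qed
      show ?case by (rule measure_pmf.finite_measure_mono[OF sub]) simp
    qed
  qed
qed

end


context galpha
begin

lemma bulk:
  fixes J :: "'j set" and x \<beta> lam :: "'j \<Rightarrow> real" and G :: "real \<Rightarrow> real" and c Bd \<eta> :: real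
  assumes J: "finite J" and c: "c \<ge> 0" and G: "continuous_on {0..1} G"
    and Bd: "\<And>t. t \<in> {0..1} \<Longrightarrow> \<bar>G t\<bar> \<le> Bd" and \<eta>: "\<eta> > 0"
  shows "((\<lambda>N. measure_pmf.prob (RN g J x \<beta> lam c N)
     {\<xi>. \<bar>(\<Sum>k\<in>{..<N} - (\<lambda>j. kjN (x j) N) ` J. real (\<xi> k) * G (real k / real N)) / real N
            - c * integral {0..1} G\<bar> > \<eta>}) \<longlongrightarrow> 0) sequentially"
proof -
  define \<Phi> where "\<Phi> = Phi g c"
  have \<Phi>: "\<Phi> \<ge> 0" "Rmean g \<Phi> = c" unfolding \<Phi>_def using Phi_props[OF c] by auto
  define q where "q = Ppmf g \<Phi>"
  define h where "h n = real n - c" for n :: nat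
  have B0: "Bd \<ge> 0" using Bd[of 0] by simp
  have ih: "integrable (measure_pmf q) h"
    unfolding h_def q_def using Ppmf_mean(1)[OF \<Phi>(1)] by simp
  have ih2: "integrable (measure_pmf q) (\<lambda>n. h n ^ 2)"
  proof -
    have "(\<lambda>n. h n ^ 2) = (\<lambda>n. real n ^ 2 - 2 * c * real n + c ^ 2)"
      by (auto simp: h_def fun_eq_iff power2_eq_square algebra_simps)
    thus ?thesis unfolding q_def using Ppmf_mean(1)[OF \<Phi>(1)] Ppmf_sq[OF \<Phi>(1)] by simp
  qed
  have e0: "measure_pmf.expectation q h = 0"
    unfolding h_def q_def using Ppmf_mean[OF \<Phi>(1)] \<Phi>(2) by simp
  define V where "V = measure_pmf.expectation q (\<lambda>n. h n ^ 2)"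
  have V0: "V \<ge> 0" unfolding V_def by simp
  define B where "B N = {..<N} - (\<lambda>j. kjN (x j) N) ` J" for N
  define D where "D N = c * (\<Sum>k\<in>B N. G (real k / real N)) / real N - c * integral {0..1} G" for N
  have D: "(D \<longlonglongrightarrow> 0)"
  proof -
    have R: "((\<lambda>N. (\<Sum>k<N. G (real k / real N)) / real N) \<longlongrightarrow> integral {0..1} G) sequentially"
      by (rule riemann_lim[OF G])
    have diff: "((\<lambda>N. (\<Sum>k<N. G (real k / real N)) / real N - (\<Sum>k\<in>B N. G (real k / real N)) / real N) \<longlongrightarrow> 0) sequentially"
    proof (rule tendsto_sandwich[where f = "\<lambda>N. - (real (card J) * Bd / real N)" and h = "\<lambda>N. real (card J) * Bd / real N"])
      have l: "((\<lambda>N. real (card J) * Bd / real N) \<longlongrightarrow> 0) sequentially"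
        using tendsto_mult[OF tendsto_const lim_inverse_n, of "real (card J) * Bd"] by (simp add: divide_inverse)
      show "((\<lambda>N. real (card J) * Bd / real N) \<longlongrightarrow> 0) sequentially" by (rule l)
      show "((\<lambda>N. - (real (card J) * Bd / real N)) \<longlongrightarrow> 0) sequentially" using tendsto_minus[OF l] by simp
      have bnd: "\<bar>(\<Sum>k<N. G (real k / real N)) / real N - (\<Sum>k\<in>B N. G (real k / real N)) / real N\<bar>
                 \<le> real (card J) * Bd / real N" for N
      proof (cases "N = 0")
        case True thus ?thesis by simp
      next
        case False
        define C where "C = {..<N} \<inter> (\<lambda>j. kjN (x j) N) ` J"
        have split: "(\<Sum>k<N. G (real k / real N)) = (\<Sum>k\<in>B N. G (real k / real N)) + (\<Sum>k\<in>C. G (real k / real N))"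
        proof -
          have "{..<N} - C = B N" unfolding B_def C_def by auto
          moreover have "C \<subseteq> {..<N}" unfolding C_def by auto
          ultimately show ?thesis using sum.subset_diff[of C "{..<N}" "\<lambda>k. G (real k / real N)"] by simp
        qed
        have "\<bar>\<Sum>k\<in>C. G (real k / real N)\<bar> \<le> (\<Sum>k\<in>C. \<bar>G (real k / real N)\<bar>)" by (rule sum_abs)
        also have "\<dots> \<le> (\<Sum>k\<in>C. Bd)"
        proof (intro sum_mono Bd)
          fix k assume "k \<in> C"
          hence "k < N" unfolding C_def by auto
          thus "real k / real N \<in> {0..1}" by auto
        qed
        also have "\<dots> = real (card C) * Bd" by simp
        also have "\<dots> \<le> real (card J) * Bd"
        proof -
          have "card C \<le> card ((\<lambda>j. kjN (x j) N) ` J)" unfolding C_def using J by (intro card_mono) auto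
          also have "\<dots> \<le> card J" by (rule card_image_le[OF J])
          finally show ?thesis using B0 by (intro mult_right_mono) auto
        qed
        finally have "\<bar>\<Sum>k\<in>C. G (real k / real N)\<bar> \<le> real (card J) * Bd" .
        thus ?thesis using False unfolding split by (simp add: add_divide_distrib divide_right_mono abs_divide)
      qed
      show "eventually (\<lambda>N. - (real (card J) * Bd / real N) \<le> (\<Sum>k<N. G (real k / real N)) / real N - (\<Sum>k\<in>B N. G (real k / real N)) / real N) sequentially"
      proof (intro always_eventually allI)
        fix N show "- (real (card J) * Bd / real N) \<le> (\<Sum>k<N. G (real k / real N)) / real N - (\<Sum>k\<in>B N. G (real k / real N)) / real N"
          using bnd[of N] by linarith
      qed
      show "eventually (\<lambda>N. (\<Sum>k<N. G (real k / real N)) / real N - (\<Sum>k\<in>B N. G (real k / real N)) / real N \<le> real (card J) * Bd / real N) sequentially"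
        using bnd by (intro always_eventually allI) (simp add: abs_le_iff)
    qed
    have "((\<lambda>N. c * ((\<Sum>k<N. G (real k / real N)) / real N
              - ((\<Sum>k<N. G (real k / real N)) / real N - (\<Sum>k\<in>B N. G (real k / real N)) / real N))
              - c * integral {0..1} G) \<longlongrightarrow> c * (integral {0..1} G - 0) - c * integral {0..1} G) sequentially"
      by (intro tendsto_intros R diff)
    thus ?thesis unfolding D_def by simp
  qed
  have cheb: "measure_pmf.prob (RN g J x \<beta> lam c N)
       {\<xi>. \<bar>\<Sum>k\<in>B N. (G (real k / real N) / real N) * h (\<xi> k)\<bar> \<ge> \<eta> / 2}
       \<le> 4 * Bd ^ 2 * V / \<eta> ^ 2 / real N" if N: "N > 0" for N
  proof -
    have "measure_pmf.prob (RN g J x \<beta> lam c N)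
       {\<xi>. \<bar>\<Sum>k\<in>B N. (G (real k / real N) / real N) * h (\<xi> k)\<bar> \<ge> \<eta> / 2}
       \<le> (\<Sum>k\<in>B N. (G (real k / real N) / real N) ^ 2) * V / (\<eta> / 2) ^ 2"
      unfolding RN_eq V_def
    proof (rule Pi_cheb[OF _ _ _ ih ih2 e0])
      show "finite {..<N}" by simp
      show "B N \<subseteq> {..<N}" unfolding B_def by auto
      fix k assume "k \<in> B N"
      thus "RNp g J x \<beta> lam c N k = q" unfolding B_def q_def \<Phi>_def by (intro RNp_bulk) auto
    qed (use \<eta> in simp)
    also have "(\<Sum>k\<in>B N. (G (real k / real N) / real N) ^ 2) \<le> (\<Sum>k\<in>B N. (Bd / real N) ^ 2)"
    proof (intro sum_mono)
      fix k assume "k \<in> B N"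
      hence "k < N" unfolding B_def by auto
      hence "\<bar>G (real k / real N)\<bar> \<le> Bd" by (intro Bd) auto
      hence "\<bar>G (real k / real N) / real N\<bar> \<le> Bd / real N" using N by (simp add: abs_divide divide_right_mono)
      hence "\<bar>G (real k / real N) / real N\<bar> \<le> \<bar>Bd / real N\<bar>" using B0 N by simp
      thus "(G (real k / real N) / real N) ^ 2 \<le> (Bd / real N) ^ 2" using abs_le_square_iff by blast
    qed
    also have "\<dots> = real (card (B N)) * (Bd / real N) ^ 2" by simp
    also have "\<dots> \<le> real N * (Bd / real N) ^ 2"
    proof -
      have "card (B N) \<le> card {..<N}" unfolding B_def by (intro card_mono) auto
      thus ?thesis by (intro mult_right_mono) auto
    qed
    also have "real N * (Bd / real N) ^ 2 = Bd ^ 2 / real N" using N by (simp add: power2_eq_square)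
    finally have "measure_pmf.prob (RN g J x \<beta> lam c N)
       {\<xi>. \<bar>\<Sum>k\<in>B N. (G (real k / real N) / real N) * h (\<xi> k)\<bar> \<ge> \<eta> / 2}
       \<le> Bd ^ 2 / real N * V / (\<eta> / 2) ^ 2"
      using V0 \<eta> by (simp add: divide_right_mono mult_right_mono)
    also have "Bd ^ 2 / real N * V / (\<eta> / 2) ^ 2 = 4 * Bd ^ 2 * V / \<eta> ^ 2 / real N"
      by (simp add: power2_eq_square field_simps)
    finally show ?thesis .
  qed
  have lim0: "((\<lambda>N. 4 * Bd ^ 2 * V / \<eta> ^ 2 / real N) \<longlongrightarrow> 0) sequentially"
    using tendsto_mult[OF tendsto_const lim_inverse_n, of "4 * Bd ^ 2 * V / \<eta> ^ 2"] by (simp add: divide_inverse)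
  show ?thesis
  proof (rule tendsto_sandwich[OF _ _ tendsto_const lim0])
    show "eventually (\<lambda>N. 0 \<le> measure_pmf.prob (RN g J x \<beta> lam c N)
     {\<xi>. \<bar>(\<Sum>k\<in>{..<N} - (\<lambda>j. kjN (x j) N) ` J. real (\<xi> k) * G (real k / real N)) / real N
            - c * integral {0..1} G\<bar> > \<eta>}) sequentially" by simp
    have evD: "eventually (\<lambda>N. \<bar>D N\<bar> < \<eta> / 2) sequentially"
      using tendstoD[OF D, of "\<eta> / 2"] \<eta> by (simp add: dist_real_def)
    show "eventually (\<lambda>N. measure_pmf.prob (RN g J x \<beta> lam c N)
     {\<xi>. \<bar>(\<Sum>k\<in>{..<N} - (\<lambda>j. kjN (x j) N) ` J. real (\<xi> k) * G (real k / real N)) / real N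
            - c * integral {0..1} G\<bar> > \<eta>} \<le> 4 * Bd ^ 2 * V / \<eta> ^ 2 / real N) sequentially"
      using evD eventually_gt_at_top[of 0]
    proof eventually_elim
      case (elim N)
      have decomp: "(\<Sum>k\<in>B N. real (\<xi> k) * G (real k / real N)) / real N - c * integral {0..1} G
            = (\<Sum>k\<in>B N. (G (real k / real N) / real N) * h (\<xi> k)) + D N" for \<xi> :: "nat \<Rightarrow> nat"
      proof -
        have "(\<Sum>k\<in>B N. (G (real k / real N) / real N) * h (\<xi> k))
              = (\<Sum>k\<in>B N. real (\<xi> k) * G (real k / real N) / real N) - (\<Sum>k\<in>B N. c * G (real k / real N) / real N)"
          unfolding h_def sum_subtractf[symmetric] by (intro sum.cong refl) (simp add: algebra_simps diff_divide_distrib)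
        thus ?thesis unfolding D_def by (simp add: sum_divide_distrib sum_distrib_left)
      qed
      have "{\<xi>. \<bar>(\<Sum>k\<in>B N. real (\<xi> k) * G (real k / real N)) / real N - c * integral {0..1} G\<bar> > \<eta>}
            \<subseteq> {\<xi>. \<bar>\<Sum>k\<in>B N. (G (real k / real N) / real N) * h (\<xi> k)\<bar> \<ge> \<eta> / 2}"
        using elim(1) unfolding decomp by auto
      hence "measure_pmf.prob (RN g J x \<beta> lam c N)
          {\<xi>. \<bar>(\<Sum>k\<in>B N. real (\<xi> k) * G (real k / real N)) / real N - c * integral {0..1} G\<bar> > \<eta>}
          \<le> measure_pmf.prob (RN g J x \<beta> lam c N) {\<xi>. \<bar>\<Sum>k\<in>B N. (G (real k / real N) / real N) * h (\<xi> k)\<bar> \<ge> \<eta> / 2}"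
        by (intro measure_pmf.finite_measure_mono) auto
      also have "\<dots> \<le> 4 * Bd ^ 2 * V / \<eta> ^ 2 / real N" using cheb elim(2) by simp
      finally show ?case unfolding B_def .
    qed
  qed
qed

end


lemma kjN_unit:
  assumes "0 \<le> xj" "xj < 1"
  shows "real (kjN xj N) / real N \<in> {0..1}"
proof (cases "N = 0")
  case False
  have "real (kjN xj N) \<le> xj * real N" by (rule kjN_bounds(1)[OF assms(1)])
  also have "\<dots> \<le> real N" using assms by (simp add: mult_left_le_one_le)
  finally show ?thesis using False by simp
qed simp

context galpha
begin

lemma site_term_lim:
  fixes J :: "'j set" and x \<beta> lam :: "'j \<Rightarrow> real" and G :: "real \<Rightarrow> real" and c Bd \<eta> :: real
  assumes J: "finite J" and xr: "\<forall>j\<in>J. 0 \<le> x j \<and> x j < 1" and xi: "inj_on x J"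
    and lam: "\<forall>j\<in>J. lam j > 0" and c: "c \<ge> 0" and Gc: "continuous_on UNIV G"
    and Bd: "\<And>t. t \<in> {0..1} \<Longrightarrow> \<bar>G t\<bar> \<le> Bd" and \<eta>: "\<eta> > 0"
    and j: "j \<in> J" and \<beta>j: "\<beta> j \<le> \<alpha>"
  shows "((\<lambda>N. measure_pmf.prob (RN g J x \<beta> lam c N)
      {\<xi>. \<bar>real (\<xi> (kjN (x j) N)) * G (real (kjN (x j) N) / real N) / real N
           - (if \<beta> j = \<alpha> then (lam j * Phi g c) powr (1 / \<alpha>) * G (x j) else 0)\<bar> > \<eta>}) \<longlongrightarrow> 0) sequentially"
proof -
  define yN where "yN N = G (real (kjN (x j) N) / real N)" for N
  have xj: "0 \<le> x j" "x j < 1" using xr j by auto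
  have yB: "\<bar>yN N\<bar> \<le> Bd" for N unfolding yN_def by (intro Bd kjN_unit xj)
  have \<Phi>: "Phi g c \<ge> 0" using Phi_props[OF c] by simp
  have lamj: "lam j > 0" using lam j by simp
  have ev: "eventually (\<lambda>N. measure_pmf.prob (Ppmf g (lam j * real N powr \<beta> j * Phi g c))
         {n. \<bar>real n * yN N / real N - (if \<beta> j = \<alpha> then (lam j * Phi g c) powr (1 / \<alpha>) * G (x j) else 0)\<bar> > \<eta>}
       = measure_pmf.prob (RN g J x \<beta> lam c N)
      {\<xi>. \<bar>real (\<xi> (kjN (x j) N)) * G (real (kjN (x j) N) / real N) / real N
           - (if \<beta> j = \<alpha> then (lam j * Phi g c) powr (1 / \<alpha>) * G (x j) else 0)\<bar> > \<eta>}) sequentially"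
    using kjN_inj_eventually[OF J xr xi]
  proof eventually_elim
    case (elim N)
    show ?case unfolding yN_def
      by (subst site_prob[where P = "\<lambda>n. \<bar>real n * G (real (kjN (x j) N) / real N) / real N
           - (if \<beta> j = \<alpha> then (lam j * Phi g c) powr (1 / \<alpha>) * G (x j) else 0)\<bar> > \<eta>"])
         (use elim j in auto)
  qed
  show ?thesis
  proof (rule Lim_transform_eventually[OF _ ev])
    show "((\<lambda>N. measure_pmf.prob (Ppmf g (lam j * real N powr \<beta> j * Phi g c))
         {n. \<bar>real n * yN N / real N - (if \<beta> j = \<alpha> then (lam j * Phi g c) powr (1 / \<alpha>) * G (x j) else 0)\<bar> > \<eta>})
         \<longlongrightarrow> 0) sequentially"
    proof (cases "\<beta> j = \<alpha>")
      case True
      have y: "(yN \<longlongrightarrow> G (x j)) sequentially"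
        unfolding yN_def
        by (rule isCont_tendsto_compose[OF _ kjN_ratio[OF xj(1)]]) (use Gc in \<open>simp add: continuous_on_eq_continuous_at\<close>)
      show ?thesis using S2[OF lamj \<Phi> \<eta> y yB] True by simp
    next
      case False
      hence "\<beta> j < \<alpha>" using \<beta>j by simp
      thus ?thesis using S3[OF lamj _ \<Phi> \<eta> yB] False by simp
    qed
  qed
qed

end


theorem mainTheorem5:
  fixes g :: "nat \<Rightarrow> real" and gs \<alpha> :: real
    and J :: "'j set" and x \<beta> lam :: "'j \<Rightarrow> real"
    and G :: "real \<Rightarrow> real" and c \<delta> :: real
  assumes g: "n_alpha_type g gs \<alpha>"
    and J: "finite J"
    and x_range: "\<forall>j\<in>J. 0 \<le> x j \<and> x j < 1"
    and x_inj: "inj_on x J"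
    and lam: "\<forall>j\<in>J. lam j > 0"
    and G_cont: "continuous_on UNIV G"
    and G_per: "\<forall>t. G (t + 1) = G t"
    and c: "c \<ge> 0"
    and \<delta>: "\<delta> > 0"
  shows "((\<lambda>N. measure_pmf.prob (RN g J x \<beta> lam c N)
             {\<xi>. \<bar>pairN G J x \<beta> \<alpha> N \<xi> - pairLim g G J x \<beta> lam \<alpha> c\<bar> > \<delta>})
           \<longlongrightarrow> 0) sequentially
       \<and> (\<forall>j\<in>J. \<beta> j > \<alpha> \<longrightarrow>
           ((\<lambda>N. measure_pmf.prob (RN g J x \<beta> lam c N)
             {\<xi>. \<bar>real N powr (- \<beta> j / \<alpha>) * real (\<xi> (kjN (x j) N))
                  - (lam j * Phi g c) powr (1 / \<alpha>)\<bar> > \<delta>})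
           \<longlongrightarrow> 0) sequentially)"
proof -
  interpret galpha g gs \<alpha> by unfold_locales (rule g)
  have \<Phi>: "Phi g c \<ge> 0" using Phi_props[OF c] by simp
  have G01: "continuous_on {0..1} G" by (rule continuous_on_subset[OF G_cont]) auto
  have "bounded (G ` {0..1})" by (intro compact_imp_bounded compact_continuous_image G01 compact_Icc)
  then obtain Bd where Bd0: "\<forall>y\<in>G ` {0..1}. norm y \<le> Bd" unfolding bounded_iff by blast
  have Bd: "\<And>t. t \<in> {0..1} \<Longrightarrow> \<bar>G t\<bar> \<le> Bd" using Bd0 by auto
  have evinj: "eventually (\<lambda>N. N > 0 \<and> inj_on (\<lambda>j. kjN (x j) N) J \<and> (\<forall>j\<in>J. kjN (x j) N < N)) sequentially"
    by (rule kjN_inj_eventually[OF J x_range x_inj])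
  have part2: "\<forall>j\<in>J. \<beta> j > \<alpha> \<longrightarrow>
           ((\<lambda>N. measure_pmf.prob (RN g J x \<beta> lam c N)
             {\<xi>. \<bar>real N powr (- \<beta> j / \<alpha>) * real (\<xi> (kjN (x j) N))
                  - (lam j * Phi g c) powr (1 / \<alpha>)\<bar> > \<delta>})
           \<longlongrightarrow> 0) sequentially"
  proof (intro ballI impI)
    fix j assume j: "j \<in> J" and \<beta>j: "\<beta> j > \<alpha>"
    have lamj: "lam j > 0" using lam j by simp
    have ev: "eventually (\<lambda>N. measure_pmf.prob (Ppmf g (lam j * real N powr \<beta> j * Phi g c))
             {n. \<bar>real N powr (- \<beta> j / \<alpha>) * real n - (lam j * Phi g c) powr (1 / \<alpha>)\<bar> > \<delta>}
          = measure_pmf.prob (RN g J x \<beta> lam c N)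
             {\<xi>. \<bar>real N powr (- \<beta> j / \<alpha>) * real (\<xi> (kjN (x j) N))
                  - (lam j * Phi g c) powr (1 / \<alpha>)\<bar> > \<delta>}) sequentially"
      using evinj
    proof eventually_elim
      case (elim N)
      show ?case
        by (subst site_prob[where P = "\<lambda>n. \<bar>real N powr (- \<beta> j / \<alpha>) * real n - (lam j * Phi g c) powr (1 / \<alpha>)\<bar> > \<delta>"])
           (use elim j in auto)
    qed
    show "((\<lambda>N. measure_pmf.prob (RN g J x \<beta> lam c N)
             {\<xi>. \<bar>real N powr (- \<beta> j / \<alpha>) * real (\<xi> (kjN (x j) N))
                  - (lam j * Phi g c) powr (1 / \<alpha>)\<bar> > \<delta>})
           \<longlongrightarrow> 0) sequentially"
      by (rule Lim_transform_eventually[OF S1[OF lamj \<beta>j \<Phi> \<delta>] ev])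
  qed
  define Jle where "Jle = {j\<in>J. \<beta> j \<le> \<alpha>}"
  have Jle: "finite Jle" "Jle \<subseteq> J" unfolding Jle_def using J by auto
  define t where "t j = (if \<beta> j = \<alpha> then (lam j * Phi g c) powr (1 / \<alpha>) * G (x j) else 0)" for j
  define \<eta> where "\<eta> = \<delta> / (real (card Jle) + 1)"
  have \<eta>: "\<eta> > 0" unfolding \<eta>_def using \<delta> by simp
  have \<delta>\<eta>: "\<delta> = \<eta> + real (card Jle) * \<eta>"
  proof -
    have "\<eta> + real (card Jle) * \<eta> = (real (card Jle) + 1) * \<eta>" by (simp add: algebra_simps)
    also have "\<dots> = \<delta>" unfolding \<eta>_def by simp
    finally show ?thesis by simp
  qed
  define Eb where "Eb N = {\<xi>. \<bar>(\<Sum>k\<in>{..<N} - (\<lambda>j. kjN (x j) N) ` J. real (\<xi> k) * G (real k / real N)) / real N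
            - c * integral {0..1} G\<bar> > \<eta>}" for N
  define Ej where "Ej N j = {\<xi>. \<bar>real (\<xi> (kjN (x j) N)) * G (real (kjN (x j) N) / real N) / real N - t j\<bar> > \<eta>}" for N j
  have limb: "((\<lambda>N. measure_pmf.prob (RN g J x \<beta> lam c N) (Eb N)) \<longlongrightarrow> 0) sequentially"
    unfolding Eb_def by (rule bulk[OF J c G01 Bd \<eta>])
  have limj: "((\<lambda>N. measure_pmf.prob (RN g J x \<beta> lam c N) (Ej N j)) \<longlongrightarrow> 0) sequentially" if j: "j \<in> Jle" for j
    unfolding Ej_def t_def
    by (rule site_term_lim[OF J x_range x_inj lam c G_cont Bd \<eta>]) (use j in \<open>auto simp: Jle_def\<close>)
  have limsum: "((\<lambda>N. measure_pmf.prob (RN g J x \<beta> lam c N) (Eb N)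
                   + (\<Sum>j\<in>Jle. measure_pmf.prob (RN g J x \<beta> lam c N) (Ej N j))) \<longlongrightarrow> 0) sequentially"
    using tendsto_add[OF limb tendsto_null_sum[OF limj]] by simp
  have pairLim_eq: "pairLim g G J x \<beta> lam \<alpha> c = c * integral {0..1} G + (\<Sum>j\<in>Jle. t j)"
  proof -
    have "(\<Sum>j\<in>Jle. t j) = (\<Sum>j\<in>{j\<in>Jle. \<beta> j = \<alpha>}. (lam j * Phi g c) powr (1 / \<alpha>) * G (x j))"
      unfolding t_def by (rule sum.inter_filter[symmetric, OF Jle(1)])
    also have "{j\<in>Jle. \<beta> j = \<alpha>} = {j\<in>J. \<beta> j = \<alpha>}" unfolding Jle_def by auto
    finally show ?thesis unfolding pairLim_def by simp
  qed
  have part1: "((\<lambda>N. measure_pmf.prob (RN g J x \<beta> lam c N)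
             {\<xi>. \<bar>pairN G J x \<beta> \<alpha> N \<xi> - pairLim g G J x \<beta> lam \<alpha> c\<bar> > \<delta>})
           \<longlongrightarrow> 0) sequentially"
  proof (rule tendsto_sandwich[OF _ _ tendsto_const limsum])
    show "eventually (\<lambda>N. 0 \<le> measure_pmf.prob (RN g J x \<beta> lam c N)
             {\<xi>. \<bar>pairN G J x \<beta> \<alpha> N \<xi> - pairLim g G J x \<beta> lam \<alpha> c\<bar> > \<delta>}) sequentially" by simp
    show "eventually (\<lambda>N. measure_pmf.prob (RN g J x \<beta> lam c N)
             {\<xi>. \<bar>pairN G J x \<beta> \<alpha> N \<xi> - pairLim g G J x \<beta> lam \<alpha> c\<bar> > \<delta>}
          \<le> measure_pmf.prob (RN g J x \<beta> lam c N) (Eb N)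
                   + (\<Sum>j\<in>Jle. measure_pmf.prob (RN g J x \<beta> lam c N) (Ej N j))) sequentially"
      using evinj
    proof eventually_elim
      case (elim N)
      have inj: "inj_on (\<lambda>j. kjN (x j) N) J" and lt: "\<forall>j\<in>J. kjN (x j) N < N" using elim by auto
      define k where "k j = kjN (x j) N" for j
      define Bs where "Bs = {..<N} - k ` J"
      have setid: "{..<N} - {kjN (x j) N | j. j \<in> J \<and> \<beta> j > \<alpha>} = Bs \<union> k ` Jle"
      proof
        show "{..<N} - {kjN (x j) N | j. j \<in> J \<and> \<beta> j > \<alpha>} \<subseteq> Bs \<union> k ` Jle"
          unfolding Bs_def k_def Jle_def by (auto simp: not_less)
        show "Bs \<union> k ` Jle \<subseteq> {..<N} - {kjN (x j) N | j. j \<in> J \<and> \<beta> j > \<alpha>}"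
        proof
          fix y assume y: "y \<in> Bs \<union> k ` Jle"
          show "y \<in> {..<N} - {kjN (x j) N | j. j \<in> J \<and> \<beta> j > \<alpha>}"
          proof (cases "y \<in> Bs")
            case True thus ?thesis unfolding Bs_def k_def by auto
          next
            case False
            then obtain j where j: "j \<in> Jle" "y = k j" using y by auto
            have jJ: "j \<in> J" "\<beta> j \<le> \<alpha>" using j(1) unfolding Jle_def by auto
            have "y < N" using lt jJ j(2) unfolding k_def by auto
            moreover have "y \<notin> {kjN (x j) N | j. j \<in> J \<and> \<beta> j > \<alpha>}"
            proof
              assume "y \<in> {kjN (x j) N | j. j \<in> J \<and> \<beta> j > \<alpha>}"
              then obtain i where i: "i \<in> J" "\<beta> i > \<alpha>" "y = kjN (x i) N" by auto
              have "i = j" using inj_onD[OF inj _ i(1) jJ(1)] i(3) j(2) unfolding k_def by simp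
              thus False using i(2) jJ(2) by simp
            qed
            ultimately show ?thesis by simp
          qed
        qed
      qed
      have disj: "Bs \<inter> k ` Jle = {}" unfolding Bs_def using Jle(2) by auto
      have injle: "inj_on k Jle" unfolding k_def by (rule inj_on_subset[OF inj Jle(2)])
      have pairN_eq: "pairN G J x \<beta> \<alpha> N \<xi> = (\<Sum>k\<in>Bs. real (\<xi> k) * G (real k / real N)) / real N
          + (\<Sum>j\<in>Jle. real (\<xi> (k j)) * G (real (k j) / real N) / real N)" for \<xi> :: "nat \<Rightarrow> nat"
      proof -
        have "pairN G J x \<beta> \<alpha> N \<xi> = (\<Sum>k\<in>Bs \<union> k ` Jle. real (\<xi> k) * G (real k / real N)) / real N"
          unfolding pairN_def setid ..
        also have "(\<Sum>k\<in>Bs \<union> k ` Jle. real (\<xi> k) * G (real k / real N))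
            = (\<Sum>k\<in>Bs. real (\<xi> k) * G (real k / real N)) + (\<Sum>k\<in>k ` Jle. real (\<xi> k) * G (real k / real N))"
          by (rule sum.union_disjoint) (use disj Jle(1) in \<open>auto simp: Bs_def\<close>)
        also have "(\<Sum>k\<in>k ` Jle. real (\<xi> k) * G (real k / real N)) = (\<Sum>j\<in>Jle. real (\<xi> (k j)) * G (real (k j) / real N))"
          by (rule sum.reindex[OF injle, unfolded comp_def])
        finally show ?thesis by (simp add: add_divide_distrib sum_divide_distrib)
      qed
      have sub: "{\<xi>. \<bar>pairN G J x \<beta> \<alpha> N \<xi> - pairLim g G J x \<beta> lam \<alpha> c\<bar> > \<delta>}
                 \<subseteq> Eb N \<union> (\<Union>j\<in>Jle. Ej N j)"
      proof (rule subsetI, rule ccontr)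
        fix \<xi> assume big: "\<xi> \<in> {\<xi>. \<bar>pairN G J x \<beta> \<alpha> N \<xi> - pairLim g G J x \<beta> lam \<alpha> c\<bar> > \<delta>}"
        assume "\<xi> \<notin> Eb N \<union> (\<Union>j\<in>Jle. Ej N j)"
        hence nb: "\<bar>(\<Sum>k\<in>Bs. real (\<xi> k) * G (real k / real N)) / real N - c * integral {0..1} G\<bar> \<le> \<eta>"
          and nj: "\<And>j. j \<in> Jle \<Longrightarrow> \<bar>real (\<xi> (k j)) * G (real (k j) / real N) / real N - t j\<bar> \<le> \<eta>"
          unfolding Eb_def Ej_def Bs_def k_def by auto
        have eq: "pairN G J x \<beta> \<alpha> N \<xi> - pairLim g G J x \<beta> lam \<alpha> c
          = ((\<Sum>k\<in>Bs. real (\<xi> k) * G (real k / real N)) / real N - c * integral {0..1} G)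
            + (\<Sum>j\<in>Jle. real (\<xi> (k j)) * G (real (k j) / real N) / real N - t j)"
          unfolding pairN_eq pairLim_eq by (simp add: sum_subtractf)
        have t1: "\<bar>pairN G J x \<beta> \<alpha> N \<xi> - pairLim g G J x \<beta> lam \<alpha> c\<bar>
           \<le> \<bar>(\<Sum>k\<in>Bs. real (\<xi> k) * G (real k / real N)) / real N - c * integral {0..1} G\<bar>
            + \<bar>\<Sum>j\<in>Jle. real (\<xi> (k j)) * G (real (k j) / real N) / real N - t j\<bar>"
          unfolding eq by (rule abs_triangle_ineq)
        have t2: "\<bar>\<Sum>j\<in>Jle. real (\<xi> (k j)) * G (real (k j) / real N) / real N - t j\<bar>
           \<le> (\<Sum>j\<in>Jle. \<bar>real (\<xi> (k j)) * G (real (k j) / real N) / real N - t j\<bar>)"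
          by (rule sum_abs)
        have "\<bar>pairN G J x \<beta> \<alpha> N \<xi> - pairLim g G J x \<beta> lam \<alpha> c\<bar>
           \<le> \<bar>(\<Sum>k\<in>Bs. real (\<xi> k) * G (real k / real N)) / real N - c * integral {0..1} G\<bar>
            + (\<Sum>j\<in>Jle. \<bar>real (\<xi> (k j)) * G (real (k j) / real N) / real N - t j\<bar>)"
          using t1 t2 by linarith
        also have "\<dots> \<le> \<eta> + (\<Sum>j\<in>Jle. \<eta>)" using nb nj by (intro add_mono sum_mono) auto
        also have "\<dots> = \<delta>" using \<delta>\<eta> by simp
        finally show False using big by simp
      qed
      have "measure_pmf.prob (RN g J x \<beta> lam c N)
             {\<xi>. \<bar>pairN G J x \<beta> \<alpha> N \<xi> - pairLim g G J x \<beta> lam \<alpha> c\<bar> > \<delta>}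
          \<le> measure_pmf.prob (RN g J x \<beta> lam c N) (Eb N \<union> (\<Union>j\<in>Jle. Ej N j))"
        by (rule measure_pmf.finite_measure_mono[OF sub]) simp
      also have "\<dots> \<le> measure_pmf.prob (RN g J x \<beta> lam c N) (Eb N)
           + measure_pmf.prob (RN g J x \<beta> lam c N) (\<Union>j\<in>Jle. Ej N j)"
        by (rule measure_Un_le) auto
      also have "measure_pmf.prob (RN g J x \<beta> lam c N) (\<Union>j\<in>Jle. Ej N j)
           \<le> (\<Sum>j\<in>Jle. measure_pmf.prob (RN g J x \<beta> lam c N) (Ej N j))"
        by (rule measure_UNION_le[OF Jle(1)]) auto
      finally show ?case by simp
    qed
  qed
  show ?thesis using part1 part2 by blast
qed


end
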